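(* Let $k=k_0m$ with $k_0\ge1$. For any initial condition $(X(0),Y(0),V_{s,\alpha}(0),W_{s,\alpha}(0))\in\mathcal M^\bullet$, the flow at time $t$ of the Hamiltonian vector field $f\mapsto\{\tfrac1k\operatorname{tr}(Y^k),f\}$ is $X(t)=X(0)\exp(-tY(0)^k)+Y(0)^{-1}\big[\exp(-tY(0)^k)-1_{\rm cyc}\big]$, $Y(t)=Y(0)$, $V_{s,\alpha}(t)=V_{s,\alpha}(0)$, $W_{s,\alpha}(t)=W_{s,\alpha}(0)$, where the term $Y(0)^{-1}[\exp(-tY(0)^k)-1_{\rm cyc}]$ denotes the power series in non-negative powers of $Y(0)$ obtained by expanding the exponential (so no invertibility of $Y(0)$ is required). Equivalently, the vector field is $\frac{dX}{dt}=-Y^{k-1}-XY^k$, $\frac{dY}{dt}=0$, $\frac{dV_{s,\alpha}}{dt}=0$, $\frac{dW_{s,\alpha}}{dt}=0$.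
   Context: Fix integers $m\ge2$, $n\ge1$ and $\mathbf d=(d_0,\dots,d_{m-1})\in\mathbb N^m$ with $d_0\ge1$. Indices $r,s$ range over $\mathbb Z_m$, identified with $\{0,\dots,m-1\}$ with its usual order; Kronecker deltas of such indices are taken modulo $m$. A spin index is a pair $(s,\alpha)$ with $s\in\mathbb Z_m$, $1\le\alpha\le d_s$. $\mathcal M^\bullet$ is the smooth affine variety of tuples $(X_s,Y_s,V_{s,\alpha},W_{s,\alpha})$, $X_s,Y_s\in\mathrm{Mat}(n\times n,\mathbb C)$, $V_{s,\alpha}\in\mathrm{Mat}(1\times n,\mathbb C)$, $W_{s,\alpha}\in\mathrm{Mat}(n\times1,\mathbb C)$, with $\mathrm{Id}_n+X_sY_s$, $\mathrm{Id}_n+Y_sX_s$, $\mathrm{Id}_n+W_{s,\alpha}V_{s,\alpha}$ invertible and $1+V_{s,\alpha}W_{s,\alpha}\ne0$. $X=\sum_sX_s$ is the $nm\times nm$ block matrix whose only nonzero $n\times n$ blocks are $X_s$ in block position $(s,s+1)$; $Y=\sum_sY_s$ has $Y_s$ in block position $(s+1,s)$; $1_{\rm cyc}=\mathrm{Id}_{nm}$. For a function $F$, the Hamiltonian vector field is $f\mapsto\{F,f\}$ and its flow is the solution of $\frac{d}{dt}f=\{F,f\}$ for all entry functions $f$ (applied entrywise to matrices). The quasi-Poisson bracket $\{-,-\}$ on $\mathcal M^\bullet$ is the antisymmetric biderivation given on entry functions by ($o(s,r)=\operatorname{sgn}(r-s)$ computed in $\{0,\dots,m-1\}$, $o(\alpha,\beta)=\operatorname{sgn}(\beta-\alpha)$):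 $\{(X_r)_{ij},(X_s)_{kl}\}=\tfrac12\delta_{s,r-1}(X_{r-1}X_r)_{kj}\delta_{il}-\tfrac12\delta_{s,r+1}\delta_{kj}(X_rX_{r+1})_{il}$; $\{(Y_r)_{ij},(Y_s)_{kl}\}=\tfrac12\delta_{s,r-1}\delta_{kj}(Y_rY_{r-1})_{il}-\tfrac12\delta_{s,r+1}(Y_{r+1}Y_r)_{kj}\delta_{il}$; $\{(X_r)_{ij},(Y_s)_{kl}\}=\delta_{sr}\big(\delta_{kj}\delta_{il}+\tfrac12(Y_rX_r)_{kj}\delta_{il}+\tfrac12\delta_{kj}(X_rY_r)_{il}\big)-\tfrac12\delta_{s,r-1}(X_r)_{kj}(Y_{r-1})_{il}+\tfrac12\delta_{s,r+1}(Y_{r+1})_{kj}(X_r)_{il}$; $\{(X_r)_{ij},(W_{s,\alpha})_k\}=\tfrac12\delta_{s,r+1}\delta_{kj}(X_rW_{r+1,\alpha})_i-\tfrac12\delta_{rs}(X_r)_{kj}(W_{r,\alpha})_i$; $\{(X_r)_{ij},(V_{s,\alpha})_l\}=\tfrac12\delta_{rs}(V_{r,\alpha}X_r)_j\delta_{il}-\tfrac12\delta_{s,r+1}(V_{r+1,\alpha})_j(X_r)_{il}$; $\{(Y_r)_{ij},(W_{s,\alpha})_k\}=\tfrac12\delta_{rs}\delta_{kj}(Y_rW_{r,\alpha})_i-\tfrac12\delta_{s,r+1}(Y_r)_{kj}(W_{r+1,\alpha})_i$; $\{(Y_r)_{ij},(V_{s,\alpha})_l\}=\tfrac12\delta_{s,r+1}(V_{r+1,\alpha}Y_r)_j\delta_{il}-\tfrac12\delta_{rs}(V_{r,\alpha})_j(Y_r)_{il}$;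 $\{(V_{s,\alpha})_j,(V_{r,\beta})_l\}=-\tfrac12o(s,r)(V_{s,\alpha})_j(V_{r,\beta})_l-\tfrac12\delta_{sr}o(\alpha,\beta)\big((V_{r,\beta})_j(V_{s,\alpha})_l+(V_{s,\alpha})_j(V_{r,\beta})_l\big)$; $\{(W_{s,\alpha})_i,(W_{r,\beta})_k\}=-\tfrac12o(s,r)(W_{r,\beta})_k(W_{s,\alpha})_i-\tfrac12\delta_{sr}o(\alpha,\beta)\big((W_{r,\beta})_k(W_{s,\alpha})_i+(W_{s,\alpha})_k(W_{r,\beta})_i\big)$; $\{(V_{s,\alpha})_j,(W_{r,\beta})_k\}=\tfrac12o(s,r)(W_{r,\beta})_k(V_{s,\alpha})_j+\delta_{sr}\delta_{\alpha\beta}\big(\delta_{kj}+\tfrac12(W_{r,\beta})_k(V_{s,\alpha})_j+\tfrac12\delta_{kj}V_{s,\alpha}W_{r,\beta}\big)+\tfrac12\delta_{sr}o(\alpha,\beta)\big(\delta_{kj}V_{s,\alpha}W_{r,\beta}+(W_{r,\beta})_k(V_{s,\alpha})_j\big)$. *)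

theory Defs
  imports "HOL-Analysis.Analysis" "Jordan_Normal_Form.Matrix"
begin

text \<open>CX r i j = (X_r)_ij, CY r i j = (Y_r)_ij, CV s a j = (V_{s,a})_j, CW s a k = (W_{s,a})_k.
  Matrix indices are 0-based (0..n-1); spin labels a range over 1..d s;
  the cyclic index r ranges over 0..m-1.\<close>
datatype coord = CX nat nat nat | CY nat nat nat | CV nat nat nat | CW nat nat nat

type_synonym point = "coord \<Rightarrow> complex"

definition coords :: "nat \<Rightarrow> nat \<Rightarrow> (nat \<Rightarrow> nat) \<Rightarrow> coord set" where
  "coords m n d =
     {CX r i j | r i j. r < m \<and> i < n \<and> j < n} \<union>
     {CY r i j | r i j. r < m \<and> i < n \<and> j < n} \<union>
     {CV s a j | s a j. s < m \<and> 1 \<le> a \<and> a \<le> d s \<and> j < n} \<union>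
     {CW s a j | s a j. s < m \<and> 1 \<le> a \<and> a \<le> d s \<and> j < n}"

definition cs :: "nat \<Rightarrow> nat \<Rightarrow> nat" where "cs m r = (r + 1) mod m"
definition cp :: "nat \<Rightarrow> nat \<Rightarrow> nat" where "cp m r = (r + m - 1) mod m"

definition kd :: "nat \<Rightarrow> nat \<Rightarrow> complex" where "kd a b = (if a = b then 1 else 0)"

definition osg :: "nat \<Rightarrow> nat \<Rightarrow> complex" where "osg a b = of_int (sgn (int b - int a))"

definition Xm :: "nat \<Rightarrow> point \<Rightarrow> nat \<Rightarrow> complex mat" where
  "Xm n p r = mat n n (\<lambda>(i,j). p (CX r i j))"
definition Ym :: "nat \<Rightarrow> point \<Rightarrow> nat \<Rightarrow> complex mat" where
  "Ym n p r = mat n n (\<lambda>(i,j). p (CY r i j))"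
definition Vm :: "nat \<Rightarrow> point \<Rightarrow> nat \<Rightarrow> nat \<Rightarrow> complex mat" where
  "Vm n p s a = mat 1 n (\<lambda>(_,j). p (CV s a j))"
definition Wm :: "nat \<Rightarrow> point \<Rightarrow> nat \<Rightarrow> nat \<Rightarrow> complex mat" where
  "Wm n p s a = mat n 1 (\<lambda>(i,_). p (CW s a i))"

definition Mbullet :: "nat \<Rightarrow> nat \<Rightarrow> (nat \<Rightarrow> nat) \<Rightarrow> point set" where
  "Mbullet m n d = {p. \<forall>s<m.
      invertible_mat (1\<^sub>m n + Xm n p s * Ym n p s) \<and>
      invertible_mat (1\<^sub>m n + Ym n p s * Xm n p s) \<and>
      (\<forall>a. 1 \<le> a \<and> a \<le> d s \<longrightarrow>
         invertible_mat (1\<^sub>m n + Wm n p s a * Vm n p s a) \<and>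
         1 + (Vm n p s a * Wm n p s a) $$ (0,0) \<noteq> 0)}"

text \<open>The nm x nm cyclic block matrices X (blocks X_s at (s,s+1)) and Y (blocks Y_s at (s+1,s)).\<close>
definition bigX :: "nat \<Rightarrow> nat \<Rightarrow> point \<Rightarrow> complex mat" where
  "bigX m n p = mat (n*m) (n*m) (\<lambda>(a,b).
     if b div n = cs m (a div n) then p (CX (a div n) (a mod n) (b mod n)) else 0)"
definition bigY :: "nat \<Rightarrow> nat \<Rightarrow> point \<Rightarrow> complex mat" where
  "bigY m n p = mat (n*m) (n*m) (\<lambda>(a,b).
     if a div n = cs m (b div n) then p (CY (b div n) (a mod n) (b mod n)) else 0)"

definition mtrace :: "complex mat \<Rightarrow> complex" where
  "mtrace A = (\<Sum>i<dim_row A. A $$ (i,i))"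

definition mexp :: "complex mat \<Rightarrow> complex mat" where
  "mexp A = mat (dim_row A) (dim_col A) (\<lambda>(a,b). \<Sum>j. (A ^\<^sub>m j) $$ (a,b) / of_nat (fact j))"

text \<open>The power series Y^{-1}[exp(-tY^k) - 1] = sum_{j>=1} (-t)^j/j! Y^{kj-1}.\<close>
definition expm1_over :: "nat \<Rightarrow> real \<Rightarrow> complex mat \<Rightarrow> complex mat" where
  "expm1_over k t Y = mat (dim_row Y) (dim_col Y) (\<lambda>(a,b).
     \<Sum>j. (of_real (- t)) ^ (Suc j) / of_nat (fact (Suc j)) * (Y ^\<^sub>m (k * Suc j - 1)) $$ (a,b))"

text \<open>The quasi-Poisson bracket of two entry functions, evaluated at a point p
  (the listed formulas, extended by antisymmetry).\<close>
fun qpb0 :: "nat \<Rightarrow> nat \<Rightarrow> point \<Rightarrow> coord \<Rightarrow> coord \<Rightarrow> complex option" where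
  "qpb0 m n p (CX r i j) (CX s k l) = Some (
     1/2 * kd s (cp m r) * (\<Sum>q<n. p (CX (cp m r) k q) * p (CX r q j)) * kd i l
     - 1/2 * kd s (cs m r) * kd k j * (\<Sum>q<n. p (CX r i q) * p (CX (cs m r) q l)))"
| "qpb0 m n p (CY r i j) (CY s k l) = Some (
     1/2 * kd s (cp m r) * kd k j * (\<Sum>q<n. p (CY r i q) * p (CY (cp m r) q l))
     - 1/2 * kd s (cs m r) * (\<Sum>q<n. p (CY (cs m r) k q) * p (CY r q j)) * kd i l)"
| "qpb0 m n p (CX r i j) (CY s k l) = Some (
     kd s r * (kd k j * kd i l + 1/2 * (\<Sum>q<n. p (CY r k q) * p (CX r q j)) * kd i l
               + 1/2 * kd k j * (\<Sum>q<n. p (CX r i q) * p (CY r q l)))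
     - 1/2 * kd s (cp m r) * p (CX r k j) * p (CY (cp m r) i l)
     + 1/2 * kd s (cs m r) * p (CY (cs m r) k j) * p (CX r i l))"
| "qpb0 m n p (CX r i j) (CW s a k) = Some (
     1/2 * kd s (cs m r) * kd k j * (\<Sum>q<n. p (CX r i q) * p (CW (cs m r) a q))
     - 1/2 * kd r s * p (CX r k j) * p (CW r a i))"
| "qpb0 m n p (CX r i j) (CV s a l) = Some (
     1/2 * kd r s * (\<Sum>q<n. p (CV r a q) * p (CX r q j)) * kd i l
     - 1/2 * kd s (cs m r) * p (CV (cs m r) a j) * p (CX r i l))"
| "qpb0 m n p (CY r i j) (CW s a k) = Some (
     1/2 * kd r s * kd k j * (\<Sum>q<n. p (CY r i q) * p (CW r a q))
     - 1/2 * kd s (cs m r) * p (CY r k j) * p (CW (cs m r) a i))"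
| "qpb0 m n p (CY r i j) (CV s a l) = Some (
     1/2 * kd s (cs m r) * (\<Sum>q<n. p (CV (cs m r) a q) * p (CY r q j)) * kd i l
     - 1/2 * kd r s * p (CV r a j) * p (CY r i l))"
| "qpb0 m n p (CV s a j) (CV r b l) = Some (
     - 1/2 * osg s r * p (CV s a j) * p (CV r b l)
     - 1/2 * kd s r * osg a b * (p (CV r b j) * p (CV s a l) + p (CV s a j) * p (CV r b l)))"
| "qpb0 m n p (CW s a i) (CW r b k) = Some (
     - 1/2 * osg s r * p (CW r b k) * p (CW s a i)
     - 1/2 * kd s r * osg a b * (p (CW r b k) * p (CW s a i) + p (CW s a k) * p (CW r b i)))"
| "qpb0 m n p (CV s a j) (CW r b k) = Some (
     1/2 * osg s r * p (CW r b k) * p (CV s a j)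
     + kd s r * kd a b * (kd k j + 1/2 * p (CW r b k) * p (CV s a j)
                          + 1/2 * kd k j * (\<Sum>q<n. p (CV s a q) * p (CW r b q)))
     + 1/2 * kd s r * osg a b * (kd k j * (\<Sum>q<n. p (CV s a q) * p (CW r b q))
                                 + p (CW r b k) * p (CV s a j)))"
| "qpb0 m n p _ _ = None"

definition qpb :: "nat \<Rightarrow> nat \<Rightarrow> point \<Rightarrow> coord \<Rightarrow> coord \<Rightarrow> complex" where
  "qpb m n p g f = (case qpb0 m n p g f of Some v \<Rightarrow> v
                     | None \<Rightarrow> (case qpb0 m n p f g of Some v \<Rightarrow> - v | None \<Rightarrow> 0))"

definition pdiff :: "(point \<Rightarrow> complex) \<Rightarrow> point \<Rightarrow> coord \<Rightarrow> complex" where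
  "pdiff F p g = deriv (\<lambda>z. F (p(g := z))) (p g)"

text \<open>Hamiltonian vector field f \<mapsto> {F,f} on an entry function f, via the biderivation rule
  {F,f} = sum_g (dF/dg) {g,f}.\<close>
definition hamvf :: "nat \<Rightarrow> nat \<Rightarrow> (nat \<Rightarrow> nat) \<Rightarrow> (point \<Rightarrow> complex) \<Rightarrow> point \<Rightarrow> coord \<Rightarrow> complex" where
  "hamvf m n d F p f = (\<Sum>g\<in>coords m n d. pdiff F p g * qpb m n p g f)"

definition trYk :: "nat \<Rightarrow> nat \<Rightarrow> nat \<Rightarrow> point \<Rightarrow> complex" where
  "trYk m n k p = mtrace (bigY m n p ^\<^sub>m k) / of_nat k"

end

theory Submission
  imports Defs
begin


lemma mult_entry:
  assumes "A \<in> carrier_mat nr nk" "B \<in> carrier_mat nk nc" "i < nr" "j < nc"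
  shows "(A * B) $$ (i, j) = (\<Sum>c<nk. A $$ (i, c) * B $$ (c, j))"
  using assms by (auto simp: scalar_prod_def atLeast0LessThan intro!: sum.cong)

lemma pow_commute:
  assumes "A \<in> carrier_mat N N"
  shows "A * A ^\<^sub>m j = A ^\<^sub>m j * A"
proof (induction j)
  case 0 then show ?case using assms by simp
next
  case (Suc j)
  have "A * A ^\<^sub>m Suc j = (A * A ^\<^sub>m j) * A"
    using assms by (simp add: assoc_mult_mat[of A N N "A ^\<^sub>m j" N A N])
  also have "\<dots> = (A ^\<^sub>m j * A) * A" using Suc by simp
  finally show ?case by simp
qed

lemma pow_add:
  assumes "A \<in> carrier_mat N N"
  shows "A ^\<^sub>m a * A ^\<^sub>m b = A ^\<^sub>m (a + b)"
proof (induction b)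
  case 0 then show ?case using assms by simp
next
  case (Suc b)
  have "A ^\<^sub>m a * A ^\<^sub>m Suc b = (A ^\<^sub>m a * A ^\<^sub>m b) * A"
    using assms by (simp del: assoc_mult_mat add: assoc_mult_mat[symmetric, of _ N N _ N _ N])
  then show ?case using Suc by simp
qed

lemma smult_smult_mat: "a \<cdot>\<^sub>m (b \<cdot>\<^sub>m M) = (a * b :: 'a :: semigroup_mult) \<cdot>\<^sub>m M"
  by (rule eq_matI) (auto simp: mult.assoc)

lemma smult_pow:
  fixes A :: "'a::comm_ring_1 mat"
  assumes "A \<in> carrier_mat N N"
  shows "(z \<cdot>\<^sub>m A) ^\<^sub>m j = (z ^ j) \<cdot>\<^sub>m (A ^\<^sub>m j)"
proof (induction j)
  case 0 then show ?case using assms by (auto intro!: eq_matI)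
next
  case (Suc j)
  have c: "A ^\<^sub>m j \<in> carrier_mat N N" using assms by simp
  show ?case unfolding pow_mat.simps Suc
    using mult_smult_assoc_mat[OF c smult_carrier_mat[OF assms], of "z^j" z]
      mult_smult_distrib[OF c assms, of z]
    by (simp add: smult_smult_mat mult.commute)
qed

lemma idx_div: "(i::nat) < n \<Longrightarrow> (r * n + i) div n = r" by simp
lemma idx_mod: "(i::nat) < n \<Longrightarrow> (r * n + i) mod n = i" by simp
lemma idx_lt: "(r::nat) < m \<Longrightarrow> i < n \<Longrightarrow> r * n + i < n * m"
proof -
  assume "r < m" "i < n"
  then have "r * n + i < r * n + n" by simp
  also have "\<dots> = (r + 1) * n" by simp
  also have "\<dots> \<le> m * n" using \<open>r < m\<close> by (intro mult_right_mono) auto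
  finally show ?thesis by (simp add: mult.commute)
qed

lemma div_lt: "(c::nat) < n * m \<Longrightarrow> c div n < m"
  by (simp add: less_mult_imp_div_less mult.commute)

lemma block_sum:
  fixes B m n :: nat
  assumes "B < m" "\<And>c. c < n * m \<Longrightarrow> c div n \<noteq> B \<Longrightarrow> g c = 0"
  shows "(\<Sum>c<n * m. g c) = (\<Sum>i<n. g (B * n + i))"
proof -
  have inj: "inj_on (\<lambda>i. B * n + i) {..<n}" by (auto simp: inj_on_def)
  have sub: "(\<lambda>i. B * n + i) ` {..<n} \<subseteq> {..<n * m}" using idx_lt[OF assms(1)] by auto
  have "(\<Sum>c<n * m. g c) = (\<Sum>c\<in>(\<lambda>i. B * n + i) ` {..<n}. g c)"
  proof (rule sum.mono_neutral_right)
    show "\<forall>c\<in>{..<n * m} - (\<lambda>i. B * n + i) ` {..<n}. g c = 0"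
    proof
      fix c assume c: "c \<in> {..<n * m} - (\<lambda>i. B * n + i) ` {..<n}"
      have "c div n \<noteq> B"
      proof
        assume h: "c div n = B"
        have "c = B * n + c mod n" using h div_mult_mod_eq[of c n] by simp
        moreover have "c mod n < n" using c by (cases "n = 0") auto
        ultimately show False using c by blast
      qed
      then show "g c = 0" using assms(2) c by auto
    qed
  qed (use sub in auto)
  also have "\<dots> = (\<Sum>i<n. g (B * n + i))" by (rule sum.reindex[OF inj, unfolded comp_def])
  finally show ?thesis .
qed


definition mnorm :: "nat \<Rightarrow> complex mat \<Rightarrow> real" where
  "mnorm N B = 1 + (\<Sum>a<N. \<Sum>b<N. norm (B $$ (a, b)))"

lemma mnorm_ge1: "mnorm N B \<ge> 1"
  unfolding mnorm_def by (simp add: sum_nonneg)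

lemma col_norm_le: "b < N \<Longrightarrow> (\<Sum>c<N. norm (B $$ (c, b))) \<le> mnorm N B"
proof -
  assume b: "b < N"
  have "(\<Sum>c<N. norm (B $$ (c, b))) \<le> (\<Sum>c<N. \<Sum>b'<N. norm (B $$ (c, b')))"
    by (intro sum_mono member_le_sum) (use b in auto)
  then show ?thesis unfolding mnorm_def by simp
qed

lemma pow_bound:
  assumes B: "B \<in> carrier_mat N N" and "a < N" "b < N"
  shows "norm ((B ^\<^sub>m j) $$ (a, b)) \<le> mnorm N B ^ j"
  using assms(2,3)
proof (induction j arbitrary: b)
  case 0 then show ?case using B by simp
next
  case (Suc j)
  have "(B ^\<^sub>m Suc j) $$ (a, b) = (\<Sum>c<N. (B ^\<^sub>m j) $$ (a, c) * B $$ (c, b))"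
    using B Suc.prems by (simp add: mult_entry[of _ N N _ N] del: index_mult_mat)
  also have "norm \<dots> \<le> (\<Sum>c<N. norm ((B ^\<^sub>m j) $$ (a, c)) * norm (B $$ (c, b)))"
    by (rule order_trans[OF norm_sum]) (simp add: norm_mult)
  also have "\<dots> \<le> (\<Sum>c<N. mnorm N B ^ j * norm (B $$ (c, b)))"
    by (intro sum_mono mult_right_mono) (use Suc in auto)
  also have "\<dots> = mnorm N B ^ j * (\<Sum>c<N. norm (B $$ (c, b)))"
    by (simp add: sum_distrib_left)
  also have "\<dots> \<le> mnorm N B ^ j * mnorm N B"
    by (intro mult_left_mono col_norm_le) (use Suc.prems mnorm_ge1[of N B] in auto)
  finally show ?case by (simp add: mult.commute)
qed

lemma ps_summable:
  fixes c :: "nat \<Rightarrow> complex"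
  assumes "\<And>j. norm (c j) \<le> C * R ^ j / fact j"
  shows "summable (\<lambda>j. c j * z ^ j)"
proof (rule summable_comparison_test)
  show "\<exists>N. \<forall>j\<ge>N. norm (c j * z ^ j) \<le> C * (inverse (fact j) * (R * norm z) ^ j)"
  proof (intro exI allI impI)
    fix j :: nat
    have "norm (c j * z ^ j) = norm (c j) * norm z ^ j" by (simp add: norm_mult norm_power)
    also have "\<dots> \<le> C * R ^ j / fact j * norm z ^ j"
      by (intro mult_right_mono assms) auto
    also have "\<dots> = C * (inverse (fact j) * (R * norm z) ^ j)"
      by (simp add: power_mult_distrib divide_inverse)
    finally show "norm (c j * z ^ j) \<le> C * (inverse (fact j) * (R * norm z) ^ j)" .
  qed
  show "summable (\<lambda>j. C * (inverse (fact j) * (R * norm z) ^ j))"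
    by (intro summable_mult summable_exp)
qed

lemma ps_deriv:
  fixes c :: "nat \<Rightarrow> complex"
  assumes "\<And>j. norm (c j) \<le> C * R ^ j / fact j"
  shows "((\<lambda>z. \<Sum>j. c j * z ^ j) has_field_derivative (\<Sum>j. diffs c j * z ^ j)) (at z)"
  by (rule termdiffs_strong_converges_everywhere) (rule ps_summable[OF assms])

definition ecoef :: "complex mat \<Rightarrow> nat \<Rightarrow> nat \<Rightarrow> nat \<Rightarrow> complex" where
  "ecoef B a b j = (B ^\<^sub>m j) $$ (a, b) / fact j"

lemma ecoef_bound:
  assumes "B \<in> carrier_mat N N" "a < N" "b < N"
  shows "norm (ecoef B a b j) \<le> 1 * mnorm N B ^ j / fact j"
  using pow_bound[OF assms, of j] unfolding ecoef_def
  by (simp add: norm_divide divide_right_mono)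

lemma mexp_dim[simp]: "dim_row (mexp M) = dim_row M" "dim_col (mexp M) = dim_col M"
  unfolding mexp_def by simp_all

lemma mexp_carrier: "mexp M \<in> carrier_mat (dim_row M) (dim_col M)"
  unfolding mexp_def by simp

lemma mexp_carrier'[simp]: "B \<in> carrier_mat N N \<Longrightarrow> mexp (z \<cdot>\<^sub>m B) \<in> carrier_mat N N"
  using mexp_carrier[of "z \<cdot>\<^sub>m B"] by simp

lemma mexp_entry:
  assumes "B \<in> carrier_mat N N" "a < N" "b < N"
  shows "mexp (z \<cdot>\<^sub>m B) $$ (a, b) = (\<Sum>j. ecoef B a b j * z ^ j)"
  using assms unfolding mexp_def ecoef_def
  by (simp add: smult_pow[OF assms(1)] mult.commute)

lemma ecoef_summable:
  assumes "B \<in> carrier_mat N N" "a < N" "b < N"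
  shows "summable (\<lambda>j. ecoef B a b j * z ^ j)"
  by (rule ps_summable[OF ecoef_bound[OF assms]])

lemma left_mexp_entry:
  assumes B: "B \<in> carrier_mat N N" and ab: "a < N" "b < N"
  shows "(B * mexp (z \<cdot>\<^sub>m B)) $$ (a, b) = (\<Sum>j. (B ^\<^sub>m Suc j) $$ (a, b) / fact j * z ^ j)"
proof -
  have "(B * mexp (z \<cdot>\<^sub>m B)) $$ (a, b) = (\<Sum>l<N. B $$ (a, l) * mexp (z \<cdot>\<^sub>m B) $$ (l, b))"
    using assms by (simp add: mult_entry[of _ N N _ N] del: index_mult_mat)
  also have "\<dots> = (\<Sum>l<N. B $$ (a, l) * (\<Sum>j. ecoef B l b j * z ^ j))"
    by (intro sum.cong refl) (use assms in \<open>simp add: mexp_entry\<close>)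
  also have "\<dots> = (\<Sum>l<N. \<Sum>j. B $$ (a, l) * (ecoef B l b j * z ^ j))"
    by (intro sum.cong refl suminf_mult[symmetric] ecoef_summable[OF B _ ab(2)]) auto
  also have "\<dots> = (\<Sum>j. \<Sum>l<N. B $$ (a, l) * (ecoef B l b j * z ^ j))"
    by (intro suminf_sum[symmetric] summable_mult ecoef_summable[OF B _ ab(2)]) auto
  also have "\<dots> = (\<Sum>j. (B ^\<^sub>m Suc j) $$ (a, b) / fact j * z ^ j)"
  proof (rule suminf_cong)
    fix j
    have "(B ^\<^sub>m Suc j) $$ (a, b) = (B * B ^\<^sub>m j) $$ (a, b)"
      using pow_commute[OF B, of j] by simp
    also have "\<dots> = (\<Sum>l<N. B $$ (a, l) * (B ^\<^sub>m j) $$ (l, b))"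
      using assms by (simp add: mult_entry[of _ N N _ N] del: index_mult_mat)
    finally have e: "(B ^\<^sub>m Suc j) $$ (a, b) = (\<Sum>l<N. B $$ (a, l) * (B ^\<^sub>m j) $$ (l, b))" .
    show "(\<Sum>l<N. B $$ (a, l) * (ecoef B l b j * z ^ j)) = (B ^\<^sub>m Suc j) $$ (a, b) / fact j * z ^ j"
      unfolding e ecoef_def sum_divide_distrib sum_distrib_right
      by (intro sum.cong refl) (simp add: field_simps)
  qed
  finally show ?thesis .
qed

lemma right_mexp_entry:
  assumes B: "B \<in> carrier_mat N N" and ab: "a < N" "b < N"
  shows "(mexp (z \<cdot>\<^sub>m B) * B) $$ (a, b) = (\<Sum>j. (B ^\<^sub>m Suc j) $$ (a, b) / fact j * z ^ j)"
proof -
  have "(mexp (z \<cdot>\<^sub>m B) * B) $$ (a, b) = (\<Sum>l<N. mexp (z \<cdot>\<^sub>m B) $$ (a, l) * B $$ (l, b))"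
    using assms by (simp add: mult_entry[of _ N N _ N] del: index_mult_mat)
  also have "\<dots> = (\<Sum>l<N. (\<Sum>j. ecoef B a l j * z ^ j) * B $$ (l, b))"
    by (intro sum.cong refl) (use assms in \<open>simp add: mexp_entry\<close>)
  also have "\<dots> = (\<Sum>l<N. \<Sum>j. (ecoef B a l j * z ^ j) * B $$ (l, b))"
    by (intro sum.cong refl suminf_mult2 ecoef_summable[OF B ab(1)]) auto
  also have "\<dots> = (\<Sum>j. \<Sum>l<N. (ecoef B a l j * z ^ j) * B $$ (l, b))"
    by (intro suminf_sum[symmetric] summable_mult2 ecoef_summable[OF B ab(1)]) auto
  also have "\<dots> = (\<Sum>j. (B ^\<^sub>m Suc j) $$ (a, b) / fact j * z ^ j)"
  proof (rule suminf_cong)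
    fix j
    have e: "(B ^\<^sub>m Suc j) $$ (a, b) = (\<Sum>l<N. (B ^\<^sub>m j) $$ (a, l) * B $$ (l, b))"
      by (simp only: pow_mat.simps) (rule mult_entry, use assms in auto)
    show "(\<Sum>l<N. (ecoef B a l j * z ^ j) * B $$ (l, b)) = (B ^\<^sub>m Suc j) $$ (a, b) / fact j * z ^ j"
      unfolding e ecoef_def sum_divide_distrib sum_distrib_right
      by (intro sum.cong refl) (simp add: field_simps)
  qed
  finally show ?thesis .
qed

lemma mexp_commute:
  assumes B: "B \<in> carrier_mat N N"
  shows "mexp (z \<cdot>\<^sub>m B) * B = B * mexp (z \<cdot>\<^sub>m B)"
proof (rule eq_matI)
  fix i j assume "i < dim_row (B * mexp (z \<cdot>\<^sub>m B))" "j < dim_col (B * mexp (z \<cdot>\<^sub>m B))"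
  then have ij: "i < N" "j < N" using B by auto
  show "(mexp (z \<cdot>\<^sub>m B) * B) $$ (i, j) = (B * mexp (z \<cdot>\<^sub>m B)) $$ (i, j)"
    using left_mexp_entry[OF B ij] right_mexp_entry[OF B ij] by simp
qed (use B in auto)

lemma mexp_deriv_field:
  assumes B: "B \<in> carrier_mat N N" and ab: "a < N" "b < N"
  shows "((\<lambda>z. mexp (z \<cdot>\<^sub>m B) $$ (a, b)) has_field_derivative (B * mexp (z \<cdot>\<^sub>m B)) $$ (a, b)) (at z)"
proof -
  have "((\<lambda>z. \<Sum>j. ecoef B a b j * z ^ j) has_field_derivative (\<Sum>j. diffs (ecoef B a b) j * z ^ j)) (at z)"
    by (rule ps_deriv[OF ecoef_bound[OF assms]])
  moreover have "(\<Sum>j. diffs (ecoef B a b) j * z ^ j) = (B * mexp (z \<cdot>\<^sub>m B)) $$ (a, b)"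
    unfolding left_mexp_entry[OF assms] diffs_def ecoef_def
  proof (intro suminf_cong)
    fix j
    have "of_nat (Suc j) * ((B ^\<^sub>m Suc j) $$ (a, b) / fact (Suc j)) = (B ^\<^sub>m Suc j) $$ (a, b) / (fact j :: complex)"
      by (simp add: fact_Suc del: of_nat_Suc pow_mat.simps)
    then show "of_nat (Suc j) * ((B ^\<^sub>m Suc j) $$ (a, b) / fact (Suc j)) * z ^ j = (B ^\<^sub>m Suc j) $$ (a, b) / fact j * z ^ j"
      by simp
  qed
  ultimately show ?thesis
    using mexp_entry[OF assms] by simp
qed

lemma mexp_deriv:
  assumes B: "B \<in> carrier_mat N N" and ab: "a < N" "b < N"
  shows "((\<lambda>s. mexp ((of_real s * w) \<cdot>\<^sub>m B) $$ (a, b)) has_vector_derivative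
           w * (B * mexp ((of_real t * w) \<cdot>\<^sub>m B)) $$ (a, b)) (at t)"
proof -
  have "((\<lambda>z. mexp ((z * w) \<cdot>\<^sub>m B) $$ (a, b)) has_field_derivative
          (B * mexp ((of_real t * w) \<cdot>\<^sub>m B)) $$ (a, b) * w) (at (of_real t))"
    by (rule DERIV_chain2[OF mexp_deriv_field[OF assms]]) (auto intro!: derivative_eq_intros)
  from has_vector_derivative_real_field[OF this, of UNIV] show ?thesis by (simp add: mult.commute)
qed

lemma mexp_deriv_pos:
  assumes B: "B \<in> carrier_mat N N" and ab: "a < N" "b < N"
  shows "((\<lambda>s. mexp (of_real s \<cdot>\<^sub>m B) $$ (a, b)) has_vector_derivative
           (B * mexp (of_real t \<cdot>\<^sub>m B)) $$ (a, b)) (at t)"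
  using mexp_deriv[OF assms, of 1 t] by simp

lemma mexp_deriv_neg:
  assumes B: "B \<in> carrier_mat N N" and ab: "a < N" "b < N"
  shows "((\<lambda>s. mexp ((- of_real s) \<cdot>\<^sub>m B) $$ (a, b)) has_vector_derivative
           - (B * mexp ((- of_real t) \<cdot>\<^sub>m B)) $$ (a, b)) (at t)"
  using mexp_deriv[OF assms, of "-1" t] by simp

lemma mexp_zero:
  assumes B: "B \<in> carrier_mat N N"
  shows "mexp (0 \<cdot>\<^sub>m B) = 1\<^sub>m N"
proof (rule eq_matI)
  fix a b assume ab: "a < dim_row (1\<^sub>m N)" "b < dim_col (1\<^sub>m N)"
  then have "mexp (0 \<cdot>\<^sub>m B) $$ (a, b) = (\<Sum>j. ecoef B a b j * 0 ^ j)"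
    using mexp_entry[OF B] by simp
  also have "\<dots> = ecoef B a b 0" by (rule powser_zero)
  finally show "mexp (0 \<cdot>\<^sub>m B) $$ (a, b) = 1\<^sub>m N $$ (a, b)" using ab B by (simp add: ecoef_def)
qed (use B in auto)

lemma deriv0_const:
  fixes f :: "real \<Rightarrow> complex"
  assumes "\<And>t. (f has_vector_derivative 0) (at t)"
  shows "f t = f 0"
proof -
  obtain c where "\<And>x. x \<in> UNIV \<Longrightarrow> f x = c"
    by (rule has_vector_derivative_zero_constant[of UNIV f]) (use assms in auto)
  then show ?thesis by simp
qed

lemma prod_deriv:
  fixes F G :: "real \<Rightarrow> complex mat"
  assumes F: "\<And>s. F s \<in> carrier_mat N N" and G: "\<And>s. G s \<in> carrier_mat N N"
    and DF: "DF \<in> carrier_mat N N" and DG: "DG \<in> carrier_mat N N"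
    and dF: "\<And>a b. a < N \<Longrightarrow> b < N \<Longrightarrow> ((\<lambda>s. F s $$ (a, b)) has_vector_derivative DF $$ (a, b)) (at t)"
    and dG: "\<And>a b. a < N \<Longrightarrow> b < N \<Longrightarrow> ((\<lambda>s. G s $$ (a, b)) has_vector_derivative DG $$ (a, b)) (at t)"
    and ab: "a < N" "b < N"
  shows "((\<lambda>s. (F s * G s) $$ (a, b)) has_vector_derivative (DF * G t + F t * DG) $$ (a, b)) (at t)"
proof -
  have e: "(\<lambda>s. (F s * G s) $$ (a, b)) = (\<lambda>s. \<Sum>c<N. F s $$ (a, c) * G s $$ (c, b))"
    using F G ab by (simp add: mult_entry[of _ N N _ N] del: index_mult_mat)
  have "((\<lambda>s. \<Sum>c<N. F s $$ (a, c) * G s $$ (c, b)) has_vector_derivative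
          (\<Sum>c<N. F t $$ (a, c) * DG $$ (c, b) + DF $$ (a, c) * G t $$ (c, b))) (at t)"
    by (intro has_vector_derivative_sum has_vector_derivative_mult dF dG) (use ab in auto)
  moreover have "(\<Sum>c<N. F t $$ (a, c) * DG $$ (c, b) + DF $$ (a, c) * G t $$ (c, b))
       = (DF * G t + F t * DG) $$ (a, b)"
  proof -
    have "(DF * G t + F t * DG) $$ (a, b) = (DF * G t) $$ (a, b) + (F t * DG) $$ (a, b)"
      by (rule index_add_mat) (use F[of t] G[of t] DF DG ab in auto)
    also have "\<dots> = (\<Sum>c<N. DF $$ (a, c) * G t $$ (c, b)) + (\<Sum>c<N. F t $$ (a, c) * DG $$ (c, b))"
      using F G DF DG ab by (simp add: mult_entry[of _ N N _ N] del: index_mult_mat)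
    finally show ?thesis by (simp add: sum.distrib add.commute)
  qed
  ultimately show ?thesis unfolding e by simp
qed


lemma mexp_inv:
  assumes K: "K \<in> carrier_mat N N"
  shows "mexp (of_real t \<cdot>\<^sub>m K) * mexp ((- of_real t) \<cdot>\<^sub>m K) = 1\<^sub>m N"
proof (rule eq_matI)
  fix a b assume "a < dim_row (1\<^sub>m N)" "b < dim_col (1\<^sub>m N)"
  then have ab: "a < N" "b < N" by auto
  define F where "F s = mexp (of_real s \<cdot>\<^sub>m K)" for s :: real
  define G where "G s = mexp ((- of_real s) \<cdot>\<^sub>m K)" for s :: real
  have FC: "F s \<in> carrier_mat N N" "G s \<in> carrier_mat N N" for s
    unfolding F_def G_def using K by auto
  have d0: "((\<lambda>s. (F s * G s) $$ (a, b)) has_vector_derivative 0) (at t')" for t'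
  proof -
    have "((\<lambda>s. (F s * G s) $$ (a, b)) has_vector_derivative
        ((K * F t') * G t' + F t' * (- (K * G t'))) $$ (a, b)) (at t')"
    proof (rule prod_deriv[OF FC(1) FC(2)])
      show "K * F t' \<in> carrier_mat N N" "- (K * G t') \<in> carrier_mat N N"
        using K FC by auto
      fix a b assume ab: "a < N" "b < N"
      show "((\<lambda>s. F s $$ (a, b)) has_vector_derivative (K * F t') $$ (a, b)) (at t')"
        unfolding F_def by (rule mexp_deriv_pos[OF K ab])
      show "((\<lambda>s. G s $$ (a, b)) has_vector_derivative (- (K * G t')) $$ (a, b)) (at t')"
        unfolding G_def using mexp_deriv_neg[OF K ab, of t'] K ab by simp
    qed (use ab in auto)
    moreover have "((K * F t') * G t' + F t' * (- (K * G t'))) $$ (a, b) = 0"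
    proof -
      have "F t' * (K * G t') = (F t' * K) * G t'" using FC K by (simp add: assoc_mult_mat[of _ N N _ N _ N])
      also have "\<dots> = (K * F t') * G t'" unfolding F_def using mexp_commute[OF K] by simp
      finally have e: "F t' * (K * G t') = (K * F t') * G t'" .
      have X: "K * F t' * G t' \<in> carrier_mat N N" using FC(1)[of t'] FC(2)[of t'] K by auto
      have "F t' * (- (K * G t')) = - (K * F t' * G t')"
        using e uminus_mult_right_mat[of "F t'" "K * G t'"] FC(1)[of t'] FC(2)[of t'] K by simp
      moreover have "(K * F t' * G t' + - (K * F t' * G t')) $$ (a, b) = 0"
        by (subst index_add_mat) (use X ab K FC(1)[of t'] FC(2)[of t'] in \<open>auto simp: carrier_matD\<close>)
      ultimately show ?thesis by simp
    qed
    ultimately show ?thesis by simp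
  qed
  have "(F t * G t) $$ (a, b) = (F 0 * G 0) $$ (a, b)"
    by (rule deriv0_const) (rule d0)
  also have "\<dots> = 1\<^sub>m N $$ (a, b)"
    unfolding F_def G_def using mexp_zero[OF K] K by simp
  finally show "(mexp (of_real t \<cdot>\<^sub>m K) * mexp ((- of_real t) \<cdot>\<^sub>m K)) $$ (a, b) = 1\<^sub>m N $$ (a, b)"
    unfolding F_def G_def .
qed (use K in auto)

lemma mexp_inv':
  assumes K: "K \<in> carrier_mat N N"
  shows "mexp ((- of_real t) \<cdot>\<^sub>m K) * mexp (of_real t \<cdot>\<^sub>m K) = 1\<^sub>m N"
  using mexp_inv[OF K, of "-t"] by simp

lemma lin_unique:
  fixes Z :: "real \<Rightarrow> complex mat"
  assumes K: "K \<in> carrier_mat N N" and ZC: "\<And>s. Z s \<in> carrier_mat N N"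
    and Z0: "Z 0 = 0\<^sub>m N N"
    and dZ: "\<And>t a b. a < N \<Longrightarrow> b < N \<Longrightarrow>
               ((\<lambda>s. Z s $$ (a, b)) has_vector_derivative (- (Z t * K)) $$ (a, b)) (at t)"
  shows "Z t = 0\<^sub>m N N"
proof -
  define F where "F s = mexp (of_real s \<cdot>\<^sub>m K)" for s :: real
  have FC: "F s \<in> carrier_mat N N" for s unfolding F_def using K by auto
  have G0: "(Z s * F s) $$ (a, b) = 0" if ab: "a < N" "b < N" for s a b
  proof -
    have d0: "((\<lambda>s. (Z s * F s) $$ (a, b)) has_vector_derivative 0) (at t')" for t'
    proof -
      have "((\<lambda>s. (Z s * F s) $$ (a, b)) has_vector_derivative
          ((- (Z t' * K)) * F t' + Z t' * (K * F t')) $$ (a, b)) (at t')"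
      proof (rule prod_deriv[OF ZC FC])
        show "- (Z t' * K) \<in> carrier_mat N N" "K * F t' \<in> carrier_mat N N"
          using K FC[of t'] ZC[of t'] by auto
        fix a b assume ab: "a < N" "b < N"
        show "((\<lambda>s. F s $$ (a, b)) has_vector_derivative (K * F t') $$ (a, b)) (at t')"
          unfolding F_def by (rule mexp_deriv_pos[OF K ab])
        show "((\<lambda>s. Z s $$ (a, b)) has_vector_derivative (- (Z t' * K)) $$ (a, b)) (at t')"
          by (rule dZ[OF ab])
      qed (use ab in auto)
      moreover have "((- (Z t' * K)) * F t' + Z t' * (K * F t')) $$ (a, b) = 0"
      proof -
        have e: "Z t' * (K * F t') = (Z t' * K) * F t'"
          using FC K ZC by (simp add: assoc_mult_mat[of _ N N _ N _ N])
        have X: "Z t' * K * F t' \<in> carrier_mat N N" using FC[of t'] ZC[of t'] K by auto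
        have "(- (Z t' * K)) * F t' = - (Z t' * K * F t')"
          using uminus_mult_left_mat[of "Z t' * K" "F t'"] FC[of t'] ZC[of t'] K by simp
        then show ?thesis using X ab e by simp
      qed
      ultimately show ?thesis by simp
    qed
    have "(Z s * F s) $$ (a, b) = (Z 0 * F 0) $$ (a, b)"
      by (rule deriv0_const) (rule d0)
    also have "\<dots> = 0" using ab FC[of 0] by (simp add: Z0)
    finally show ?thesis .
  qed
  have ZF: "Z t * F t = 0\<^sub>m N N"
    by (rule eq_matI) (use G0 FC[of t] ZC[of t] in \<open>auto simp del: index_mult_mat(1)\<close>)
  have "Z t = Z t * (F t * mexp ((- of_real t) \<cdot>\<^sub>m K))"
    unfolding F_def mexp_inv[OF K] using ZC[of t] by simp
  also have "\<dots> = (Z t * F t) * mexp ((- of_real t) \<cdot>\<^sub>m K)"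
    using ZC FC K by (simp add: assoc_mult_mat[of _ N N _ N _ N])
  also have "\<dots> = 0\<^sub>m N N" unfolding ZF using K by simp
  finally show ?thesis .
qed

lemma pow_mult:
  assumes A: "A \<in> carrier_mat N N"
  shows "(A ^\<^sub>m a) ^\<^sub>m b = A ^\<^sub>m (a * b)"
proof (induction b)
  case 0 then show ?case using A by simp
next
  case (Suc b)
  have "(A ^\<^sub>m a) ^\<^sub>m Suc b = A ^\<^sub>m (a * b) * A ^\<^sub>m a" using Suc by simp
  also have "\<dots> = A ^\<^sub>m (a * b + a)" by (rule pow_add[OF A])
  finally show ?case by (simp add: add.commute)
qed

lemma pow_one: "A \<in> carrier_mat N N \<Longrightarrow> A ^\<^sub>m 1 = A"
  by simp


lemma sum_suminf_right:
  fixes c :: "nat \<Rightarrow> nat \<Rightarrow> complex"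
  assumes "\<And>l. l < N \<Longrightarrow> summable (c l)"
  shows "(\<Sum>l<N. suminf (c l) * x l) = (\<Sum>i. \<Sum>l<N. c l i * x l)"
    and "summable (\<lambda>i. \<Sum>l<N. c l i * x l)"
proof -
  show "(\<Sum>l<N. suminf (c l) * x l) = (\<Sum>i. \<Sum>l<N. c l i * x l)"
    by (subst suminf_sum) (auto intro!: sum.cong suminf_mult2 summable_mult2 assms)
  show "summable (\<lambda>i. \<Sum>l<N. c l i * x l)"
    by (intro summable_sum summable_mult2 assms) auto
qed

lemma sum_suminf_left:
  fixes c :: "nat \<Rightarrow> nat \<Rightarrow> complex"
  assumes "\<And>l. l < N \<Longrightarrow> summable (c l)"
  shows "(\<Sum>l<N. x l * suminf (c l)) = (\<Sum>i. \<Sum>l<N. x l * c l i)"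
  using sum_suminf_right[of N c x, OF assms] by (simp add: mult.commute)

definition scoef :: "complex mat \<Rightarrow> nat \<Rightarrow> nat \<Rightarrow> nat \<Rightarrow> nat \<Rightarrow> complex" where
  "scoef Y k a b i = (if i = 0 then 0 else (Y ^\<^sub>m (k * i - 1)) $$ (a, b) / fact i)"

lemma scoef_bound:
  assumes Y: "Y \<in> carrier_mat N N" and ab: "a < N" "b < N"
  shows "norm (scoef Y k a b i) \<le> 1 * (mnorm N Y ^ k) ^ i / fact i"
proof (cases "i = 0")
  case True then show ?thesis by (simp add: scoef_def)
next
  case False
  have M1: "mnorm N Y \<ge> 1" by (rule mnorm_ge1)
  have "norm ((Y ^\<^sub>m (k * i - 1)) $$ (a, b)) \<le> mnorm N Y ^ (k * i - 1)"
    by (rule pow_bound[OF assms])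
  also have "\<dots> \<le> mnorm N Y ^ (k * i)" by (rule power_increasing) (use M1 in auto)
  also have "\<dots> = (mnorm N Y ^ k) ^ i" by (simp add: power_mult)
  finally show ?thesis using False unfolding scoef_def
    by (simp add: norm_divide divide_right_mono)
qed

lemma scoef_summable:
  assumes Y: "Y \<in> carrier_mat N N" and ab: "a < N" "b < N"
  shows "summable (\<lambda>i. scoef Y k a b i * z ^ i)"
  by (rule ps_summable[OF scoef_bound[OF assms]])

lemma expm1_dim[simp]: "dim_row (expm1_over k t Y) = dim_row Y" "dim_col (expm1_over k t Y) = dim_col Y"
  unfolding expm1_over_def by (simp_all only: dim_row_mat dim_col_mat)

lemma expm1_carrier[simp]: "Y \<in> carrier_mat N N \<Longrightarrow> expm1_over k t Y \<in> carrier_mat N N"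
  by (metis carrier_matD carrier_matI expm1_dim)

lemma swap_div: "(x::complex) / c * y = y / c * x"
  by (simp add: divide_inverse mult_ac)

lemma S_entry:
  assumes Y: "Y \<in> carrier_mat N N" and ab: "a < N" "b < N"
  shows "expm1_over k t Y $$ (a, b) = (\<Sum>i. scoef Y k a b i * (- of_real t) ^ i)"
proof -
  let ?f = "\<lambda>i. scoef Y k a b i * (- of_real t) ^ i"
  have "expm1_over k t Y $$ (a, b) = (\<Sum>j. (of_real (- t)) ^ (Suc j) / of_nat (fact (Suc j)) * (Y ^\<^sub>m (k * Suc j - 1)) $$ (a, b))"
    using assms unfolding expm1_over_def by (subst index_mat) (auto simp del: of_real_minus)
  also have "\<dots> = (\<Sum>j. ?f (Suc j))"
    by (intro suminf_cong) (simp only: scoef_def Suc_not_Zero if_False of_nat_fact of_real_minus swap_div)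
  also have "\<dots> = suminf ?f - ?f 0" by (rule suminf_split_head[OF scoef_summable[OF assms]])
  also have "\<dots> = suminf ?f" by (simp add: scoef_def)
  finally show ?thesis .
qed

lemma S_zero:
  assumes Y: "Y \<in> carrier_mat N N"
  shows "expm1_over k 0 Y = 0\<^sub>m N N"
  by (rule eq_matI) (use Y in \<open>auto simp: expm1_over_def\<close>)

lemma pow_mult_entry:
  assumes Y: "Y \<in> carrier_mat N N" and ab: "a < N" "b < N"
  shows "(\<Sum>l<N. (Y ^\<^sub>m p) $$ (a, l) * (Y ^\<^sub>m q) $$ (l, b)) = (Y ^\<^sub>m (p + q)) $$ (a, b)"
  using mult_entry[of "Y ^\<^sub>m p" N N "Y ^\<^sub>m q" N a b] pow_add[OF Y, of p q] assms by simp

lemma shift0: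
  fixes f :: "nat \<Rightarrow> complex"
  assumes "summable (\<lambda>i. f (Suc i))" "f 0 = 0"
  shows "suminf f = (\<Sum>i. f (Suc i))" "summable f"
proof -
  show sf: "summable f" using assms(1) summable_Suc_iff by blast
  show "suminf f = (\<Sum>i. f (Suc i))" using suminf_split_head[OF sf] assms(2) by simp
qed

lemma pow1: "Y \<in> carrier_mat N N \<Longrightarrow> Y ^\<^sub>m 1 = Y" by simp

lemma mexp_minus1:
  assumes Y: "Y \<in> carrier_mat N N" and ab: "a < N" "b < N"
  shows "mexp (w \<cdot>\<^sub>m Y ^\<^sub>m k) $$ (a, b) - 1\<^sub>m N $$ (a, b) =
      (\<Sum>i. (if i = 0 then 0 else (Y ^\<^sub>m (k * i)) $$ (a, b) / fact i * w ^ i))"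
proof -
  have YK: "Y ^\<^sub>m k \<in> carrier_mat N N" using Y by simp
  let ?e = "\<lambda>i. ecoef (Y ^\<^sub>m k) a b i * w ^ i"
  let ?g = "\<lambda>i. (if i = 0 then 0 else (Y ^\<^sub>m (k * i)) $$ (a, b) / fact i * w ^ i)"
  have eg: "?e (Suc i) = ?g (Suc i)" for i
    by (simp only: ecoef_def pow_mult[OF Y] Suc_not_Zero if_False)
  have se: "summable ?e" by (rule ecoef_summable[OF YK ab])
  have 1: "mexp (w \<cdot>\<^sub>m Y ^\<^sub>m k) $$ (a, b) = suminf ?e" by (rule mexp_entry[OF YK ab])
  have 2: "?e 0 = 1\<^sub>m N $$ (a, b)" using ab Y by (simp add: ecoef_def)
  have 3: "suminf ?e - ?e 0 = (\<Sum>i. ?e (Suc i))"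
    by (rule suminf_split_head[symmetric, OF se])
  have "summable (\<lambda>i. ?e (Suc i))" using summable_Suc_iff[THEN iffD2, OF se] .
  then have "summable (\<lambda>i. ?g (Suc i))" by (simp only: eg)
  then have 4: "suminf ?g = (\<Sum>i. ?g (Suc i))" by (rule shift0(1)) simp
  show ?thesis unfolding 4 1 2[symmetric] 3 eg ..
qed

lemma S_times_Y:
  assumes Y: "Y \<in> carrier_mat N N" and k: "k \<ge> 1"
  shows "expm1_over k t Y * Y = mexp ((- of_real t) \<cdot>\<^sub>m Y ^\<^sub>m k) - 1\<^sub>m N"
    and "Y * expm1_over k t Y = mexp ((- of_real t) \<cdot>\<^sub>m Y ^\<^sub>m k) - 1\<^sub>m N"
proof -
  let ?w = "- of_real t :: complex"
  have pk: "k * i - 1 + 1 = k * i" "1 + (k * i - 1) = k * i" if "i \<noteq> 0" for i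
    using that k by (simp_all add: Suc_le_eq)
  show "expm1_over k t Y * Y = mexp (?w \<cdot>\<^sub>m Y ^\<^sub>m k) - 1\<^sub>m N"
  proof (rule eq_matI)
    fix a b assume "a < dim_row (mexp (?w \<cdot>\<^sub>m Y ^\<^sub>m k) - 1\<^sub>m N)" "b < dim_col (mexp (?w \<cdot>\<^sub>m Y ^\<^sub>m k) - 1\<^sub>m N)"
    then have ab: "a < N" "b < N" using Y by auto
    have "(expm1_over k t Y * Y) $$ (a, b) = (\<Sum>l<N. expm1_over k t Y $$ (a, l) * Y $$ (l, b))"
      by (rule mult_entry) (use Y ab in auto)
    also have "\<dots> = (\<Sum>l<N. (\<Sum>i. scoef Y k a l i * ?w ^ i) * Y $$ (l, b))"
      by (intro sum.cong refl) (use Y ab in \<open>simp add: S_entry\<close>)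
    also have "\<dots> = (\<Sum>i. \<Sum>l<N. scoef Y k a l i * ?w ^ i * Y $$ (l, b))"
      by (rule sum_suminf_right(1)) (rule scoef_summable[OF Y ab(1)], simp)
    also have "\<dots> = (\<Sum>i. (if i = 0 then 0 else (Y ^\<^sub>m (k * i)) $$ (a, b) / fact i * ?w ^ i))"
    proof (rule suminf_cong)
      fix i
      show "(\<Sum>l<N. scoef Y k a l i * ?w ^ i * Y $$ (l, b)) =
          (if i = 0 then 0 else (Y ^\<^sub>m (k * i)) $$ (a, b) / fact i * ?w ^ i)"
      proof (cases "i = 0")
        case True then show ?thesis by (simp add: scoef_def)
      next
        case False
        have e: "(\<Sum>l<N. (Y ^\<^sub>m (k * i - 1)) $$ (a, l) * Y $$ (l, b)) = (Y ^\<^sub>m (k * i)) $$ (a, b)"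
          using pow_mult_entry[OF Y ab, of "k * i - 1" 1] unfolding pk(1)[OF False] pow1[OF Y] .
        have "(\<Sum>l<N. scoef Y k a l i * ?w ^ i * Y $$ (l, b)) =
            (\<Sum>l<N. (Y ^\<^sub>m (k * i - 1)) $$ (a, l) * Y $$ (l, b)) * (?w ^ i / fact i)"
          unfolding sum_distrib_right by (intro sum.cong refl) (simp add: scoef_def False field_simps)
        then show ?thesis unfolding e using False by (simp add: field_simps)
      qed
    qed
    also have "\<dots> = (mexp (?w \<cdot>\<^sub>m Y ^\<^sub>m k) - 1\<^sub>m N) $$ (a, b)"
      using mexp_minus1[OF Y ab, of ?w k] Y ab by simp
    finally show "(expm1_over k t Y * Y) $$ (a, b) = (mexp (?w \<cdot>\<^sub>m Y ^\<^sub>m k) - 1\<^sub>m N) $$ (a, b)" .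
  qed (use Y in auto)
  show "Y * expm1_over k t Y = mexp (?w \<cdot>\<^sub>m Y ^\<^sub>m k) - 1\<^sub>m N"
  proof (rule eq_matI)
    fix a b assume "a < dim_row (mexp (?w \<cdot>\<^sub>m Y ^\<^sub>m k) - 1\<^sub>m N)" "b < dim_col (mexp (?w \<cdot>\<^sub>m Y ^\<^sub>m k) - 1\<^sub>m N)"
    then have ab: "a < N" "b < N" using Y by auto
    have "(Y * expm1_over k t Y) $$ (a, b) = (\<Sum>l<N. Y $$ (a, l) * expm1_over k t Y $$ (l, b))"
      by (rule mult_entry) (use Y ab in auto)
    also have "\<dots> = (\<Sum>l<N. Y $$ (a, l) * (\<Sum>i. scoef Y k l b i * ?w ^ i))"
      by (intro sum.cong refl) (use Y ab in \<open>simp add: S_entry\<close>)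
    also have "\<dots> = (\<Sum>i. \<Sum>l<N. Y $$ (a, l) * (scoef Y k l b i * ?w ^ i))"
      by (rule sum_suminf_left) (rule scoef_summable[OF Y _ ab(2)], simp)
    also have "\<dots> = (\<Sum>i. (if i = 0 then 0 else (Y ^\<^sub>m (k * i)) $$ (a, b) / fact i * ?w ^ i))"
    proof (rule suminf_cong)
      fix i
      show "(\<Sum>l<N. Y $$ (a, l) * (scoef Y k l b i * ?w ^ i)) =
          (if i = 0 then 0 else (Y ^\<^sub>m (k * i)) $$ (a, b) / fact i * ?w ^ i)"
      proof (cases "i = 0")
        case True then show ?thesis by (simp add: scoef_def)
      next
        case False
        have e: "(\<Sum>l<N. Y $$ (a, l) * (Y ^\<^sub>m (k * i - 1)) $$ (l, b)) = (Y ^\<^sub>m (k * i)) $$ (a, b)"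
          using pow_mult_entry[OF Y ab, of 1 "k * i - 1"] unfolding pk(2)[OF False] pow1[OF Y] .
        have "(\<Sum>l<N. Y $$ (a, l) * (scoef Y k l b i * ?w ^ i)) =
            (\<Sum>l<N. Y $$ (a, l) * (Y ^\<^sub>m (k * i - 1)) $$ (l, b)) * (?w ^ i / fact i)"
          unfolding sum_distrib_right by (intro sum.cong refl) (simp add: scoef_def False field_simps)
        then show ?thesis unfolding e using False by (simp add: field_simps)
      qed
    qed
    also have "\<dots> = (mexp (?w \<cdot>\<^sub>m Y ^\<^sub>m k) - 1\<^sub>m N) $$ (a, b)"
      using mexp_minus1[OF Y ab, of ?w k] Y ab by simp
    finally show "(Y * expm1_over k t Y) $$ (a, b) = (mexp (?w \<cdot>\<^sub>m Y ^\<^sub>m k) - 1\<^sub>m N) $$ (a, b)" .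
  qed (use Y in auto)
qed


lemma aux_div: "(n::complex) \<noteq> 0 \<Longrightarrow> F \<noteq> 0 \<Longrightarrow> n * (X / (n * F)) * W = X * (W / F)"
  by (simp add: field_simps)

lemma S_deriv:
  assumes Y: "Y \<in> carrier_mat N N" and k: "k \<ge> 1" and ab: "a < N" "b < N"
  shows "((\<lambda>s. expm1_over k s Y $$ (a, b)) has_vector_derivative
           (- (Y ^\<^sub>m (k - 1)) - expm1_over k t Y * Y ^\<^sub>m k) $$ (a, b)) (at t)"
proof -
  define c where "c = scoef Y k a b"
  define f where "f z = (\<Sum>i. c i * z ^ i)" for z :: complex
  define f' where "f' z = (\<Sum>i. diffs c i * z ^ i)" for z :: complex
  let ?w = "- of_real t :: complex"
  have fd: "(f has_field_derivative f' z) (at z)" for z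
    unfolding f_def f'_def c_def by (rule ps_deriv[OF scoef_bound[OF Y ab]])
  have "((\<lambda>z. f (- z)) has_field_derivative f' (- of_real t) * (- 1)) (at (of_real t))"
    by (rule DERIV_chain2[OF fd]) (auto intro!: derivative_eq_intros)
  from has_vector_derivative_real_field[OF this, of UNIV]
  have d1: "((\<lambda>s. f (- of_real s)) has_vector_derivative - f' ?w) (at t)" by simp
  have fe: "(\<lambda>s. expm1_over k s Y $$ (a, b)) = (\<lambda>s. f (- of_real s))"
    unfolding f_def c_def using S_entry[OF Y ab] by auto
  let ?g = "\<lambda>i. diffs c i * ?w ^ i"
  have sc: "summable (\<lambda>i. c i * z ^ i)" for z unfolding c_def by (rule scoef_summable[OF Y ab])
  have sg: "summable ?g" by (rule termdiff_converges_all[OF sc])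
  have g0: "?g 0 = (Y ^\<^sub>m (k - 1)) $$ (a, b)"
    by (simp add: diffs_def c_def scoef_def)
  have gS: "?g (Suc i) = (Y ^\<^sub>m (k * Suc i - 1 + k)) $$ (a, b) * (?w ^ Suc i / fact (Suc i))" for i
  proof -
    have e: "k * Suc (Suc i) - 1 = k * Suc i - 1 + k" using k by (simp add: algebra_simps)
    have "?g (Suc i) = of_nat (Suc (Suc i)) * ((Y ^\<^sub>m (k * Suc (Suc i) - 1)) $$ (a, b) / fact (Suc (Suc i))) * ?w ^ Suc i"
      by (simp only: diffs_def c_def scoef_def Suc_not_Zero if_False)
    also have "\<dots> = (Y ^\<^sub>m (k * Suc (Suc i) - 1)) $$ (a, b) * (?w ^ Suc i / fact (Suc i))"
    proof -
      have ff: "(fact (Suc (Suc i)) :: complex) = of_nat (Suc (Suc i)) * fact (Suc i)"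
        by (rule fact_Suc)
      show ?thesis unfolding ff by (rule aux_div[OF of_nat_neq_0 fact_nonzero])
    qed
    finally show ?thesis unfolding e .
  qed
  define h where "h i = (\<Sum>l<N. scoef Y k a l i * ?w ^ i * (Y ^\<^sub>m k) $$ (l, b))" for i
  have SK: "(expm1_over k t Y * Y ^\<^sub>m k) $$ (a, b) = suminf h"
  proof -
    have "(expm1_over k t Y * Y ^\<^sub>m k) $$ (a, b) = (\<Sum>l<N. expm1_over k t Y $$ (a, l) * (Y ^\<^sub>m k) $$ (l, b))"
      by (rule mult_entry) (use Y ab in auto)
    also have "\<dots> = (\<Sum>l<N. (\<Sum>i. scoef Y k a l i * ?w ^ i) * (Y ^\<^sub>m k) $$ (l, b))"
      by (intro sum.cong refl) (use Y ab in \<open>simp add: S_entry\<close>)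
    also have "\<dots> = suminf h" unfolding h_def
      by (rule sum_suminf_right(1)) (rule scoef_summable[OF Y ab(1)], simp)
    finally show ?thesis .
  qed
  have sh: "summable h" unfolding h_def
    by (rule sum_suminf_right(2)) (rule scoef_summable[OF Y ab(1)], simp)
  have h0: "h 0 = 0" by (simp add: h_def scoef_def)
  have hS: "h (Suc i) = ?g (Suc i)" for i
  proof -
    have "h (Suc i) = (\<Sum>l<N. (Y ^\<^sub>m (k * Suc i - 1)) $$ (a, l) * (Y ^\<^sub>m k) $$ (l, b)) * (?w ^ Suc i / fact (Suc i))"
      unfolding h_def sum_distrib_right by (intro sum.cong refl) (simp add: scoef_def field_simps)
    also have "\<dots> = (Y ^\<^sub>m (k * Suc i - 1 + k)) $$ (a, b) * (?w ^ Suc i / fact (Suc i))"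
      using pow_mult_entry[OF Y ab] by simp
    finally show ?thesis using gS by simp
  qed
  have "f' ?w = suminf ?g" unfolding f'_def ..
  also have "\<dots> = ?g 0 + (\<Sum>i. ?g (Suc i))" using suminf_split_head[OF sg] by simp
  also have "(\<Sum>i. ?g (Suc i)) = (\<Sum>i. h (Suc i))" by (simp only: hS)
  also have "\<dots> = suminf h"
    using suminf_split_head[OF sh] h0 by simp
  finally have fv: "f' ?w = (Y ^\<^sub>m (k - 1)) $$ (a, b) + (expm1_over k t Y * Y ^\<^sub>m k) $$ (a, b)"
    unfolding g0 SK .
  have "(- (Y ^\<^sub>m (k - 1)) - expm1_over k t Y * Y ^\<^sub>m k) $$ (a, b)
      = - (Y ^\<^sub>m (k - 1)) $$ (a, b) - (expm1_over k t Y * Y ^\<^sub>m k) $$ (a, b)"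
    using Y ab by simp
  then have "(- (Y ^\<^sub>m (k - 1)) - expm1_over k t Y * Y ^\<^sub>m k) $$ (a, b) = - f' ?w"
    unfolding fv by simp
  then show ?thesis unfolding fe using d1 by simp
qed


lemma cs_lt: "m \<ge> 1 \<Longrightarrow> cs m r < m" unfolding cs_def by simp
lemma cp_lt: "m \<ge> 1 \<Longrightarrow> cp m r < m" unfolding cp_def by simp
lemma cp_cs: "m \<ge> 1 \<Longrightarrow> s < m \<Longrightarrow> cp m (cs m s) = s"
proof -
  assume m: "m \<ge> 1" and s: "s < m"
  show ?thesis
  proof (cases "s + 1 < m")
    case True
    then have "cp m (cs m s) = (s + m) mod m" unfolding cp_def cs_def by simp
    then show ?thesis using s by simp
  next
    case False
    then have "s + 1 = m" using s by simp
    then show ?thesis unfolding cp_def cs_def by simp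
  qed
qed
lemma cs_cp: "m \<ge> 1 \<Longrightarrow> s < m \<Longrightarrow> cs m (cp m s) = s"
proof -
  assume m: "m \<ge> 1" and s: "s < m"
  have "cs m (cp m s) = ((s + m - 1) mod m + 1) mod m" unfolding cp_def cs_def by simp
  also have "\<dots> = (s + m - 1 + 1) mod m" by (simp add: mod_Suc_eq)
  also have "\<dots> = (s + m) mod m" using m by simp
  also have "\<dots> = s" using s by simp
  finally show ?thesis .
qed
lemma cs_inj: "m \<ge> 1 \<Longrightarrow> r < m \<Longrightarrow> s < m \<Longrightarrow> cs m r = cs m s \<Longrightarrow> r = s"
  by (metis cp_cs)
lemma cp_iff: "m \<ge> 1 \<Longrightarrow> r < m \<Longrightarrow> s < m \<Longrightarrow> (s = cp m r) \<longleftrightarrow> (r = cs m s)"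
  by (metis cp_cs cs_cp)
lemma cs_iff: "m \<ge> 1 \<Longrightarrow> r < m \<Longrightarrow> s < m \<Longrightarrow> (s = cs m r) \<longleftrightarrow> (r = cp m s)"
  by (metis cp_cs cs_cp)

lemma kd_sym: "kd a b = kd b a" unfolding kd_def by simp

lemma sum_kd:
  fixes f :: "nat \<Rightarrow> complex"
  assumes "s < m" shows "(\<Sum>r<m. kd r s * f r) = f s"
proof -
  have "(\<Sum>r<m. kd r s * f r) = (\<Sum>r<m. if r = s then f r else 0)"
    by (intro sum.cong refl) (simp add: kd_def)
  also have "\<dots> = f s" using assms by (simp add: sum.delta')
  finally show ?thesis .
qed

lemma sum_kd':
  fixes f :: "nat \<Rightarrow> complex"
  assumes "s < m" shows "(\<Sum>r<m. f r * kd r s) = f s"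
  using sum_kd[OF assms, of f] by (simp add: mult.commute)

lemma bigY_carrier[simp]: "bigY m n p \<in> carrier_mat (n * m) (n * m)"
  unfolding bigY_def by simp
lemma bigX_carrier[simp]: "bigX m n p \<in> carrier_mat (n * m) (n * m)"
  unfolding bigX_def by simp

lemma bigY_entry:
  assumes "m \<ge> 1" "r < m" "i < n" "j < n"
  shows "bigY m n p $$ (cs m r * n + i, r * n + j) = p (CY r i j)"
  using assms idx_lt[OF cs_lt[OF assms(1)] assms(3)] idx_lt[OF assms(2) assms(4)]
  unfolding bigY_def by simp

lemma bigX_entry:
  assumes "m \<ge> 1" "r < m" "i < n" "j < n"
  shows "bigX m n p $$ (r * n + i, cs m r * n + j) = p (CX r i j)"
  using assms idx_lt[OF cs_lt[OF assms(1)] assms(4)] idx_lt[OF assms(2) assms(3)]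
  unfolding bigX_def by simp

lemma bigY_zero:
  assumes "a < n * m" "b < n * m" "a div n \<noteq> cs m (b div n)"
  shows "bigY m n p $$ (a, b) = 0"
  using assms unfolding bigY_def by simp

lemma bigX_zero:
  assumes "a < n * m" "b < n * m" "b div n \<noteq> cs m (a div n)"
  shows "bigX m n p $$ (a, b) = 0"
  using assms unfolding bigX_def by simp

lemma bigY_cong:
  assumes "\<And>r i j. r < m \<Longrightarrow> i < n \<Longrightarrow> j < n \<Longrightarrow> p (CY r i j) = q (CY r i j)"
  shows "bigY m n p = bigY m n q"
proof (rule eq_matI)
  fix a b assume ab: "a < dim_row (bigY m n q)" "b < dim_col (bigY m n q)"
  then have "a < n * m" "b < n * m" by (simp_all add: bigY_def)
  moreover have "b div n < m" "b mod n < n" "a mod n < n"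
    using calculation div_lt[of b n m] by (auto intro: pos_mod_bound) (metis mod_less_divisor neq0_conv mult_0 not_less_zero)+
  ultimately show "bigY m n p $$ (a, b) = bigY m n q $$ (a, b)"
    unfolding bigY_def using assms by simp
qed (simp_all add: bigY_def)

lemma bigX_cong:
  assumes "\<And>r i j. r < m \<Longrightarrow> i < n \<Longrightarrow> j < n \<Longrightarrow> p (CX r i j) = q (CX r i j)"
  shows "bigX m n p = bigX m n q"
proof (rule eq_matI)
  fix a b assume ab: "a < dim_row (bigX m n q)" "b < dim_col (bigX m n q)"
  then have "a < n * m" "b < n * m" by (simp_all add: bigX_def)
  moreover have "a div n < m" "b mod n < n" "a mod n < n"
    using calculation div_lt[of a n m] by (auto intro: pos_mod_bound) (metis mod_less_divisor neq0_conv mult_0 not_less_zero)+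
  ultimately show "bigX m n p $$ (a, b) = bigX m n q $$ (a, b)"
    unfolding bigX_def using assms by simp
qed (simp_all add: bigX_def)


lemma big_dims[simp]: "dim_row (bigY m n p) = n * m" "dim_col (bigY m n p) = n * m"
  "dim_row (bigX m n p) = n * m" "dim_col (bigX m n p) = n * m"
  unfolding bigY_def bigX_def by simp_all

definition Qb :: "nat \<Rightarrow> nat \<Rightarrow> nat \<Rightarrow> point \<Rightarrow> nat \<Rightarrow> nat \<Rightarrow> nat \<Rightarrow> complex" where
  "Qb m n k p r j i = (bigY m n p ^\<^sub>m (k - 1)) $$ (r * n + j, cs m r * n + i)"
definition Ab :: "nat \<Rightarrow> nat \<Rightarrow> nat \<Rightarrow> point \<Rightarrow> nat \<Rightarrow> nat \<Rightarrow> nat \<Rightarrow> complex" where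
  "Ab m n k p r i j = (bigY m n p ^\<^sub>m k) $$ (r * n + i, r * n + j)"

context
  fixes m n k :: nat and p :: point
  assumes m1: "m \<ge> 1" and k1: "k \<ge> 1"
begin

lemma div_lt': "c < n * m \<Longrightarrow> c div n < m" by (rule div_lt)

lemma K_eq1: "bigY m n p ^\<^sub>m k = bigY m n p ^\<^sub>m (k - 1) * bigY m n p"
proof -
  have "k = Suc (k - 1)" using k1 by simp
  then show ?thesis by (metis pow_mat.simps(2))
qed

lemma K_eq2: "bigY m n p ^\<^sub>m k = bigY m n p * bigY m n p ^\<^sub>m (k - 1)"
  unfolding K_eq1 by (rule pow_commute[symmetric, OF bigY_carrier])

lemma blk_a:
  assumes r: "r < m" and j: "j < n" and l: "l < n"
  shows "(\<Sum>i<n. Qb m n k p r j i * p (CY r i l)) = Ab m n k p r j l"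
proof -
  let ?Y = "bigY m n p" and ?P = "bigY m n p ^\<^sub>m (k - 1)"
  have "Ab m n k p r j l = (?P * ?Y) $$ (r * n + j, r * n + l)" unfolding Ab_def K_eq1 ..
  also have "\<dots> = (\<Sum>c<n * m. ?P $$ (r * n + j, c) * ?Y $$ (c, r * n + l))"
    by (rule mult_entry[of _ "n*m" "n*m" _ "n*m"]) (use idx_lt r j l in auto)
  also have "\<dots> = (\<Sum>i<n. ?P $$ (r * n + j, cs m r * n + i) * ?Y $$ (cs m r * n + i, r * n + l))"
    by (rule block_sum[OF cs_lt[OF m1]]) (use bigY_zero idx_lt[OF r l] l in auto)
  also have "\<dots> = (\<Sum>i<n. Qb m n k p r j i * p (CY r i l))"
    by (intro sum.cong refl) (simp add: Qb_def bigY_entry[OF m1 r _ l])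
  finally show ?thesis ..
qed

lemma blk_b:
  assumes r: "r < m" and i: "i < n" and l: "l < n"
  shows "(\<Sum>j<n. p (CY r i j) * Qb m n k p r j l) = Ab m n k p (cs m r) i l"
proof -
  let ?Y = "bigY m n p" and ?P = "bigY m n p ^\<^sub>m (k - 1)"
  have csr: "cs m r < m" by (rule cs_lt[OF m1])
  have "Ab m n k p (cs m r) i l = (?Y * ?P) $$ (cs m r * n + i, cs m r * n + l)" unfolding Ab_def K_eq2 ..
  also have "\<dots> = (\<Sum>c<n * m. ?Y $$ (cs m r * n + i, c) * ?P $$ (c, cs m r * n + l))"
    by (rule mult_entry[of _ "n*m" "n*m" _ "n*m"]) (use idx_lt csr i l in auto)
  also have "\<dots> = (\<Sum>j<n. ?Y $$ (cs m r * n + i, r * n + j) * ?P $$ (r * n + j, cs m r * n + l))"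
  proof (rule block_sum[OF r])
    fix c assume c: "c < n * m" "c div n \<noteq> r"
    have "cs m r \<noteq> cs m (c div n)" using cs_inj[OF m1 r div_lt'[OF c(1)]] c(2) by auto
    then show "?Y $$ (cs m r * n + i, c) * ?P $$ (c, cs m r * n + l) = 0"
      using bigY_zero[of "cs m r * n + i" n m c p] idx_lt[OF csr i] c i by simp
  qed
  also have "\<dots> = (\<Sum>j<n. p (CY r i j) * Qb m n k p r j l)"
    by (intro sum.cong refl) (simp add: Qb_def bigY_entry[OF m1 r i])
  finally show ?thesis ..
qed

lemma blk_c:
  assumes s: "s < m" and kk: "kk < n" and l: "l < n"
  shows "(\<Sum>j<n. Ab m n k p (cs m s) kk j * p (CY s j l)) = (\<Sum>j<n. p (CY s kk j) * Ab m n k p s j l)"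
proof -
  let ?Y = "bigY m n p" and ?K = "bigY m n p ^\<^sub>m k"
  have css: "cs m s < m" by (rule cs_lt[OF m1])
  have "?K * ?Y = ?Y * ?K" by (rule pow_commute[symmetric, OF bigY_carrier])
  then have e: "(?K * ?Y) $$ (cs m s * n + kk, s * n + l) = (?Y * ?K) $$ (cs m s * n + kk, s * n + l)" by simp
  have "(?K * ?Y) $$ (cs m s * n + kk, s * n + l) = (\<Sum>c<n * m. ?K $$ (cs m s * n + kk, c) * ?Y $$ (c, s * n + l))"
    by (rule mult_entry[of _ "n*m" "n*m" _ "n*m"]) (use idx_lt css s kk l in auto)
  also have "\<dots> = (\<Sum>j<n. ?K $$ (cs m s * n + kk, cs m s * n + j) * ?Y $$ (cs m s * n + j, s * n + l))"
    by (rule block_sum[OF css]) (use bigY_zero idx_lt[OF s l] l in auto)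
  also have "\<dots> = (\<Sum>j<n. Ab m n k p (cs m s) kk j * p (CY s j l))"
    by (intro sum.cong refl) (simp add: Ab_def bigY_entry[OF m1 s _ l])
  finally have L: "(?K * ?Y) $$ (cs m s * n + kk, s * n + l) = (\<Sum>j<n. Ab m n k p (cs m s) kk j * p (CY s j l))" .
  have "(?Y * ?K) $$ (cs m s * n + kk, s * n + l) = (\<Sum>c<n * m. ?Y $$ (cs m s * n + kk, c) * ?K $$ (c, s * n + l))"
    by (rule mult_entry[of _ "n*m" "n*m" _ "n*m"]) (use idx_lt css s kk l in auto)
  also have "\<dots> = (\<Sum>j<n. ?Y $$ (cs m s * n + kk, s * n + j) * ?K $$ (s * n + j, s * n + l))"
  proof (rule block_sum[OF s])
    fix c assume c: "c < n * m" "c div n \<noteq> s"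
    have "cs m s \<noteq> cs m (c div n)" using cs_inj[OF m1 s div_lt'[OF c(1)]] c(2) by auto
    then show "?Y $$ (cs m s * n + kk, c) * ?K $$ (c, s * n + l) = 0"
      using bigY_zero[of "cs m s * n + kk" n m c p] idx_lt[OF css kk] c kk by simp
  qed
  also have "\<dots> = (\<Sum>j<n. p (CY s kk j) * Ab m n k p s j l)"
    by (intro sum.cong refl) (simp add: Ab_def bigY_entry[OF m1 s kk])
  finally have R: "(?Y * ?K) $$ (cs m s * n + kk, s * n + l) = (\<Sum>j<n. p (CY s kk j) * Ab m n k p s j l)" .
  show ?thesis using e L R by simp
qed

lemma blk_d:
  assumes s: "s < m" and kk: "kk < n" and l: "l < n"
  shows "(- (bigY m n p ^\<^sub>m (k - 1)) - bigX m n p * bigY m n p ^\<^sub>m k) $$ (s * n + kk, cs m s * n + l)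
       = - Qb m n k p s kk l - (\<Sum>j<n. p (CX s kk j) * Ab m n k p (cs m s) j l)"
proof -
  let ?X = "bigX m n p" and ?K = "bigY m n p ^\<^sub>m k" and ?P = "bigY m n p ^\<^sub>m (k - 1)"
  have css: "cs m s < m" by (rule cs_lt[OF m1])
  have a: "s * n + kk < n * m" "cs m s * n + l < n * m" using idx_lt s kk css l by auto
  have "(?X * ?K) $$ (s * n + kk, cs m s * n + l) = (\<Sum>c<n * m. ?X $$ (s * n + kk, c) * ?K $$ (c, cs m s * n + l))"
    by (rule mult_entry[of _ "n*m" "n*m" _ "n*m"]) (use a in auto)
  also have "\<dots> = (\<Sum>j<n. ?X $$ (s * n + kk, cs m s * n + j) * ?K $$ (cs m s * n + j, cs m s * n + l))"
    by (rule block_sum[OF css]) (use bigX_zero a kk in auto)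
  also have "\<dots> = (\<Sum>j<n. p (CX s kk j) * Ab m n k p (cs m s) j l)"
    by (intro sum.cong refl) (simp add: Ab_def bigX_entry[OF m1 s kk])
  finally have e: "(?X * ?K) $$ (s * n + kk, cs m s * n + l) = (\<Sum>j<n. p (CX s kk j) * Ab m n k p (cs m s) j l)" .
  have "(- ?P - ?X * ?K) $$ (s * n + kk, cs m s * n + l) = - ?P $$ (s * n + kk, cs m s * n + l) - (?X * ?K) $$ (s * n + kk, cs m s * n + l)"
    using a by simp
  then show ?thesis unfolding e Qb_def by simp
qed

end


lemma mtrace_comm:
  assumes X: "X \<in> carrier_mat N N" and Y: "Y \<in> carrier_mat N N"
  shows "mtrace (X * Y) = mtrace (Y * X)"
proof -
  have "mtrace (X * Y) = (\<Sum>a<N. (X * Y) $$ (a, a))" unfolding mtrace_def using X by simp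
  also have "\<dots> = (\<Sum>a<N. \<Sum>c<N. X $$ (a, c) * Y $$ (c, a))"
    by (intro sum.cong refl) (rule mult_entry, use X Y in auto)
  also have "\<dots> = (\<Sum>c<N. \<Sum>a<N. Y $$ (c, a) * X $$ (a, c))"
    by (subst sum.swap) (simp add: mult.commute)
  also have "\<dots> = (\<Sum>c<N. (Y * X) $$ (c, c))"
    by (intro sum.cong refl) (rule mult_entry[symmetric], use X Y in auto)
  also have "\<dots> = mtrace (Y * X)" unfolding mtrace_def using Y by simp
  finally show ?thesis .
qed

primrec Dm :: "nat \<Rightarrow> complex mat \<Rightarrow> complex mat \<Rightarrow> complex mat" where
  "Dm 0 M E = 0\<^sub>m (dim_row M) (dim_row M)"
| "Dm (Suc j) M E = Dm j M E * M + M ^\<^sub>m j * E"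

lemma Dm_carrier:
  assumes "M \<in> carrier_mat N N" "E \<in> carrier_mat N N"
  shows "Dm j M E \<in> carrier_mat N N"
  using assms by (induction j) auto

lemma Dm_deriv:
  assumes B: "B \<in> carrier_mat N N" and E: "E \<in> carrier_mat N N" and ab: "a < N" "b < N"
  shows "((\<lambda>z. ((B + (z - z0) \<cdot>\<^sub>m E) ^\<^sub>m j) $$ (a, b)) has_field_derivative
           (Dm j (B + (z - z0) \<cdot>\<^sub>m E) E) $$ (a, b)) (at z)"
  using ab
proof (induction j arbitrary: a b)
  case 0
  have "(\<lambda>z. ((B + (z - z0) \<cdot>\<^sub>m E) ^\<^sub>m 0) $$ (a, b)) = (\<lambda>z. 1\<^sub>m N $$ (a, b))"
    using B E by auto
  then show ?case using B E 0 by simp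
next
  case (Suc j)
  define M where "M z = B + (z - z0) \<cdot>\<^sub>m E" for z
  have MC: "M z \<in> carrier_mat N N" for z unfolding M_def using B E by auto
  have Me: "M z $$ (c, b) = B $$ (c, b) + (z - z0) * E $$ (c, b)" if "c < N" for z c
    unfolding M_def using B E that Suc.prems by simp
  have f: "(\<lambda>z. (M z ^\<^sub>m Suc j) $$ (a, b)) = (\<lambda>z. \<Sum>c<N. (M z ^\<^sub>m j) $$ (a, c) * (B $$ (c, b) + (z - z0) * E $$ (c, b)))"
  proof
    fix z
    have "(M z ^\<^sub>m Suc j) $$ (a, b) = (\<Sum>c<N. (M z ^\<^sub>m j) $$ (a, c) * M z $$ (c, b))"
      by (simp only: pow_mat.simps) (rule mult_entry, use MC Suc.prems in auto)
    also have "\<dots> = (\<Sum>c<N. (M z ^\<^sub>m j) $$ (a, c) * (B $$ (c, b) + (z - z0) * E $$ (c, b)))"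
      by (intro sum.cong refl) (simp add: Me)
    finally show "(M z ^\<^sub>m Suc j) $$ (a, b) = (\<Sum>c<N. (M z ^\<^sub>m j) $$ (a, c) * (B $$ (c, b) + (z - z0) * E $$ (c, b)))" .
  qed
  have d: "((\<lambda>z. \<Sum>c<N. (M z ^\<^sub>m j) $$ (a, c) * (B $$ (c, b) + (z - z0) * E $$ (c, b))) has_field_derivative
      (\<Sum>c<N. (Dm j (M z) E) $$ (a, c) * (B $$ (c, b) + (z - z0) * E $$ (c, b)) + (M z ^\<^sub>m j) $$ (a, c) * E $$ (c, b))) (at z)"
  proof (rule DERIV_sum)
    fix c assume c: "c \<in> {..<N}"
    have d1: "((\<lambda>z. (M z ^\<^sub>m j) $$ (a, c)) has_field_derivative (Dm j (M z) E) $$ (a, c)) (at z)"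
      unfolding M_def using Suc.IH[of a c] Suc.prems c by simp
    have d2: "((\<lambda>z. B $$ (c, b) + (z - z0) * E $$ (c, b)) has_field_derivative E $$ (c, b)) (at z)"
      by (auto intro!: derivative_eq_intros)
    show "((\<lambda>z. (M z ^\<^sub>m j) $$ (a, c) * (B $$ (c, b) + (z - z0) * E $$ (c, b))) has_field_derivative
        (Dm j (M z) E) $$ (a, c) * (B $$ (c, b) + (z - z0) * E $$ (c, b)) + (M z ^\<^sub>m j) $$ (a, c) * E $$ (c, b)) (at z)"
      using DERIV_mult'[OF d1 d2] by (simp add: add.commute)
  qed
  have v: "(\<Sum>c<N. (Dm j (M z) E) $$ (a, c) * (B $$ (c, b) + (z - z0) * E $$ (c, b)) + (M z ^\<^sub>m j) $$ (a, c) * E $$ (c, b))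
      = (Dm (Suc j) (M z) E) $$ (a, b)"
  proof -
    have DC: "Dm j (M z) E \<in> carrier_mat N N" by (rule Dm_carrier[OF MC E])
    have "(Dm (Suc j) (M z) E) $$ (a, b) = (Dm j (M z) E * M z) $$ (a, b) + (M z ^\<^sub>m j * E) $$ (a, b)"
      unfolding Dm.simps by (rule index_add_mat) (use DC MC[of z] E Suc.prems in auto)
    also have "\<dots> = (\<Sum>c<N. (Dm j (M z) E) $$ (a, c) * M z $$ (c, b)) + (\<Sum>c<N. (M z ^\<^sub>m j) $$ (a, c) * E $$ (c, b))"
      using DC MC E Suc.prems by (simp add: mult_entry[of _ N N _ N] del: index_mult_mat)
    finally show ?thesis by (simp add: Me sum.distrib)
  qed
  have "((\<lambda>z. (M z ^\<^sub>m Suc j) $$ (a, b)) has_field_derivative Dm (Suc j) (M z) E $$ (a, b)) (at z)"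
    unfolding f using d unfolding v .
  then show ?case unfolding M_def .
qed

lemma pow_commute_gen:
  assumes B: "B \<in> carrier_mat N N" and C: "C \<in> carrier_mat N N" and BC: "C * B = B * C"
  shows "C * B ^\<^sub>m j = B ^\<^sub>m j * C"
proof (induction j)
  case 0 then show ?case using B C by simp
next
  case (Suc j)
  have "C * B ^\<^sub>m Suc j = (C * B ^\<^sub>m j) * B" using B C by (simp add: assoc_mult_mat[of C N N _ N B N])
  also have "\<dots> = B ^\<^sub>m j * (C * B)" unfolding Suc using B C by (simp add: assoc_mult_mat[of _ N N C N B N])
  also have "\<dots> = B ^\<^sub>m j * (B * C)" unfolding BC ..
  also have "\<dots> = B ^\<^sub>m Suc j * C" using B C by (simp add: assoc_mult_mat[of _ N N B N C N])
  finally show ?case .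
qed

lemma Dm_trace:
  assumes B: "B \<in> carrier_mat N N" and E: "E \<in> carrier_mat N N"
  shows "C \<in> carrier_mat N N \<Longrightarrow> C * B = B * C \<Longrightarrow>
     mtrace (Dm j B E * C) = of_nat j * mtrace (E * B ^\<^sub>m (j - 1) * C)"
proof (induction j arbitrary: C)
  case 0
  then show ?case using B by (simp add: mtrace_def)
next
  case (Suc j)
  have DC: "Dm j B E \<in> carrier_mat N N" by (rule Dm_carrier[OF B E])
  have BC: "B * C \<in> carrier_mat N N" using B Suc.prems by simp
  have cBC: "(B * C) * B = B * (B * C)"
    using B Suc.prems by (simp add: assoc_mult_mat[of B N N C N B N] assoc_mult_mat[of B N N B N C N])
  have "Dm (Suc j) B E * C = (Dm j B E * B) * C + (B ^\<^sub>m j * E) * C"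
    by simp (rule add_mult_distrib_mat[of _ N N], use DC B E Suc.prems in auto)
  also have "\<dots> = Dm j B E * (B * C) + B ^\<^sub>m j * (E * C)"
    using DC B E Suc.prems by (simp add: assoc_mult_mat[of _ N N _ N C N])
  finally have "Dm (Suc j) B E * C = Dm j B E * (B * C) + B ^\<^sub>m j * (E * C)" .
  then have "mtrace (Dm (Suc j) B E * C) = mtrace (Dm j B E * (B * C)) + mtrace (B ^\<^sub>m j * (E * C))"
    using DC B E Suc.prems by (simp add: mtrace_def sum.distrib)
  also have "mtrace (Dm j B E * (B * C)) = of_nat j * mtrace (E * B ^\<^sub>m (j - 1) * (B * C))"
    by (rule Suc.IH[OF BC cBC])
  also have "of_nat j * mtrace (E * B ^\<^sub>m (j - 1) * (B * C)) = of_nat j * mtrace (E * B ^\<^sub>m j * C)"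
  proof (cases j)
    case 0 then show ?thesis by simp
  next
    case (Suc j')
    have CC: "C \<in> carrier_mat N N" by fact
    have 1: "E * (B ^\<^sub>m j' * B) * C = E * ((B ^\<^sub>m j' * B) * C)"
      by (rule assoc_mult_mat[of _ N N _ N _ N]) (use B E CC in auto)
    have 2: "(B ^\<^sub>m j' * B) * C = B ^\<^sub>m j' * (B * C)"
      by (rule assoc_mult_mat[of _ N N _ N _ N]) (use B E CC in auto)
    have 3: "E * B ^\<^sub>m j' * (B * C) = E * (B ^\<^sub>m j' * (B * C))"
      by (rule assoc_mult_mat[of _ N N _ N _ N]) (use B E CC in auto)
    have "E * B ^\<^sub>m (j - 1) * (B * C) = E * (B ^\<^sub>m j' * B) * C"
      unfolding 1 2 using 3 Suc by simp
    then show ?thesis using Suc by simp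
  qed
  also have "mtrace (B ^\<^sub>m j * (E * C)) = mtrace (E * B ^\<^sub>m j * C)"
  proof -
    have "mtrace (B ^\<^sub>m j * (E * C)) = mtrace ((E * C) * B ^\<^sub>m j)"
      by (rule mtrace_comm) (use B E Suc.prems in auto)
    also have "(E * C) * B ^\<^sub>m j = E * (B ^\<^sub>m j * C)"
      using pow_commute_gen[OF B Suc.prems(1) Suc.prems(2), of j] B E Suc.prems
      by (simp add: assoc_mult_mat[of E N N C N _ N])
    also have "\<dots> = E * B ^\<^sub>m j * C"
      using B E Suc.prems by (simp add: assoc_mult_mat[of E N N _ N C N])
    finally show ?thesis .
  qed
  finally show ?case by (simp add: algebra_simps)
qed


lemma bigY_upd_other:
  assumes "\<And>r i j. g \<noteq> CY r i j"
  shows "bigY m n (p(g := z)) = bigY m n p"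
  unfolding bigY_def using assms by (intro eq_matI) auto

lemma pdiff_nonY:
  assumes "\<And>r i j. g \<noteq> CY r i j"
  shows "pdiff (trYk m n k) p g = 0"
proof -
  have "(\<lambda>z. trYk m n k (p(g := z))) = (\<lambda>z. trYk m n k p)"
    unfolding trYk_def using bigY_upd_other[OF assms] by simp
  then show ?thesis unfolding pdiff_def by (simp add: DERIV_imp_deriv)
qed

definition Eu :: "nat \<Rightarrow> nat \<Rightarrow> nat \<Rightarrow> complex mat" where
  "Eu N \<alpha> \<beta> = mat N N (\<lambda>(a, b). if a = \<alpha> \<and> b = \<beta> then 1 else 0)"

lemma Eu_dim[simp]: "dim_row (Eu N \<alpha> \<beta>) = N" "dim_col (Eu N \<alpha> \<beta>) = N" unfolding Eu_def by simp_all

lemma Eu_carrier[simp]: "Eu N \<alpha> \<beta> \<in> carrier_mat N N" unfolding Eu_def by simp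

lemma bigY_upd_Y:
  assumes m1: "m \<ge> 1" and r: "r < m" and i: "i < n" and j: "j < n"
  shows "bigY m n (p(CY r i j := z)) = bigY m n p + (z - p (CY r i j)) \<cdot>\<^sub>m Eu (n * m) (cs m r * n + i) (r * n + j)"
proof (rule eq_matI)
  fix a b assume "a < dim_row (bigY m n p + (z - p (CY r i j)) \<cdot>\<^sub>m Eu (n * m) (cs m r * n + i) (r * n + j))"
    "b < dim_col (bigY m n p + (z - p (CY r i j)) \<cdot>\<^sub>m Eu (n * m) (cs m r * n + i) (r * n + j))"
  then have ab: "a < n * m" "b < n * m" by (simp_all add: Eu_def)
  have an: "a = a div n * n + a mod n" "b = b div n * n + b mod n" by simp_all
  show "bigY m n (p(CY r i j := z)) $$ (a, b) = (bigY m n p + (z - p (CY r i j)) \<cdot>\<^sub>m Eu (n * m) (cs m r * n + i) (r * n + j)) $$ (a, b)"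
  proof (cases "a = cs m r * n + i \<and> b = r * n + j")
    case True
    then show ?thesis using ab i j by (simp add: bigY_def Eu_def)
  next
    case False
    have "CY (b div n) (a mod n) (b mod n) \<noteq> CY r i j" if "a div n = cs m (b div n)"
    proof
      assume h: "CY (b div n) (a mod n) (b mod n) = CY r i j"
      then have "a = cs m r * n + i" "b = r * n + j" using that an by auto
      then show False using False by simp
    qed
    then show ?thesis using ab False by (auto simp: bigY_def Eu_def)
  qed
qed (simp_all add: Eu_def bigY_def)

lemma trace_Eu:
  assumes R: "R \<in> carrier_mat N N" and al: "\<alpha> < N" and be: "\<beta> < N"
  shows "mtrace (Eu N \<alpha> \<beta> * R) = R $$ (\<beta>, \<alpha>)"
proof -
  have "mtrace (Eu N \<alpha> \<beta> * R) = (\<Sum>a<N. (Eu N \<alpha> \<beta> * R) $$ (a, a))" unfolding mtrace_def by (simp add: Eu_def)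
  also have "\<dots> = (\<Sum>a<N. if a = \<alpha> then R $$ (\<beta>, \<alpha>) else 0)"
  proof (intro sum.cong refl)
    fix a assume a: "a \<in> {..<N}"
    have "(Eu N \<alpha> \<beta> * R) $$ (a, a) = (\<Sum>c<N. Eu N \<alpha> \<beta> $$ (a, c) * R $$ (c, a))"
      by (rule mult_entry) (use R a in auto)
    also have "\<dots> = (\<Sum>c<N. if c = \<beta> then (if a = \<alpha> then R $$ (\<beta>, a) else 0) else 0)"
      by (intro sum.cong refl) (use a in \<open>auto simp: Eu_def\<close>)
    also have "\<dots> = (if a = \<alpha> then R $$ (\<beta>, \<alpha>) else 0)" using be by (simp add: sum.delta')
    finally show "(Eu N \<alpha> \<beta> * R) $$ (a, a) = (if a = \<alpha> then R $$ (\<beta>, \<alpha>) else 0)" .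
  qed
  also have "\<dots> = R $$ (\<beta>, \<alpha>)" using al by (simp add: sum.delta')
  finally show ?thesis .
qed

lemma pdiff_Y:
  assumes m1: "m \<ge> 1" and k1: "k \<ge> 1" and r: "r < m" and i: "i < n" and j: "j < n"
  shows "pdiff (trYk m n k) p (CY r i j) = Qb m n k p r j i"
proof -
  let ?N = "n * m"
  let ?B = "bigY m n p"
  let ?E = "Eu ?N (cs m r * n + i) (r * n + j)"
  let ?z0 = "p (CY r i j)"
  have B: "?B \<in> carrier_mat ?N ?N" by simp
  have E: "?E \<in> carrier_mat ?N ?N" by simp
  have al: "cs m r * n + i < ?N" by (rule idx_lt[OF cs_lt[OF m1] i])
  have be: "r * n + j < ?N" by (rule idx_lt[OF r j])
  have fe: "(\<lambda>z. trYk m n k (p(CY r i j := z))) = (\<lambda>z. (\<Sum>a<?N. ((?B + (z - ?z0) \<cdot>\<^sub>m ?E) ^\<^sub>m k) $$ (a, a)) / of_nat k)"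
    unfolding trYk_def mtrace_def bigY_upd_Y[OF m1 r i j] by simp
  have B0: "?B + (?z0 - ?z0) \<cdot>\<^sub>m ?E = ?B"
    by (rule eq_matI) (use B E in auto)
  have "((\<lambda>z. (\<Sum>a<?N. ((?B + (z - ?z0) \<cdot>\<^sub>m ?E) ^\<^sub>m k) $$ (a, a)) / of_nat k) has_field_derivative
      (\<Sum>a<?N. (Dm k (?B + (?z0 - ?z0) \<cdot>\<^sub>m ?E) ?E) $$ (a, a)) / of_nat k) (at ?z0)"
    by (intro DERIV_cdivide DERIV_sum Dm_deriv[OF B E]) auto
  then have d: "((\<lambda>z. trYk m n k (p(CY r i j := z))) has_field_derivative mtrace (Dm k ?B ?E) / of_nat k) (at ?z0)"
    unfolding fe B0 mtrace_def using Dm_carrier[OF B E, of k] by simp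
  have "mtrace (Dm k ?B ?E) = mtrace (Dm k ?B ?E * 1\<^sub>m ?N)"
    using Dm_carrier[OF B E, of k] by simp
  also have "\<dots> = of_nat k * mtrace (?E * ?B ^\<^sub>m (k - 1) * 1\<^sub>m ?N)"
    by (rule Dm_trace[OF B E]) (use B in auto)
  also have "\<dots> = of_nat k * Qb m n k p r j i"
    using trace_Eu[of "?B ^\<^sub>m (k - 1)" ?N, OF _ al be] E by (simp add: Qb_def)
  finally have "mtrace (Dm k ?B ?E) / of_nat k = Qb m n k p r j i" using k1 by simp
  with d show ?thesis unfolding pdiff_def by (simp add: DERIV_imp_deriv)
qed


lemma sum_kd_all:
  fixes f :: "nat \<Rightarrow> complex"
  assumes "s < m"
  shows "(\<Sum>r<m. kd r s * f r) = f s" "(\<Sum>r<m. kd s r * f r) = f s"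
    "(\<Sum>r<m. f r * kd r s) = f s" "(\<Sum>r<m. f r * kd s r) = f s"
  using sum_kd[OF assms, of f] sum_kd'[OF assms, of f] by (simp_all add: kd_sym)

lemma finite_coords: "finite (coords m n d)"
proof -
  have sub: "coords m n d \<subseteq> (\<lambda>(r, i, j). CX r i j) ` ({..<m} \<times> {..<n} \<times> {..<n})
      \<union> (\<lambda>(r, i, j). CY r i j) ` ({..<m} \<times> {..<n} \<times> {..<n})
      \<union> (\<lambda>(s, a, j). CV s a j) ` (SIGMA s:{..<m}. {1..d s} \<times> {..<n})
      \<union> (\<lambda>(s, a, j). CW s a j) ` (SIGMA s:{..<m}. {1..d s} \<times> {..<n})"
    unfolding coords_def by (auto simp: image_iff)
  have "finite (SIGMA s:{..<m}. {1..d s} \<times> {..<n})" by auto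
  then show ?thesis by (intro finite_subset[OF sub]) auto
qed

lemma hamvf_red:
  assumes m1: "m \<ge> 1" and k1: "k \<ge> 1"
  shows "hamvf m n d (trYk m n k) p g = (\<Sum>r<m. \<Sum>i<n. \<Sum>j<n. Qb m n k p r j i * qpb m n p (CY r i j) g)"
proof -
  let ?S = "{..<m} \<times> {..<n} \<times> {..<n}"
  let ?h = "\<lambda>(r, i, j). CY r i j"
  let ?f = "\<lambda>g'. pdiff (trYk m n k) p g' * qpb m n p g' g"
  have sub: "?h ` ?S \<subseteq> coords m n d" unfolding coords_def by auto
  have inj: "inj_on ?h ?S" by (auto simp: inj_on_def)
  have "hamvf m n d (trYk m n k) p g = (\<Sum>g'\<in>coords m n d. ?f g')" unfolding hamvf_def ..
  also have "\<dots> = (\<Sum>g'\<in>?h ` ?S. ?f g')"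
  proof (rule sum.mono_neutral_right[OF finite_coords sub])
    show "\<forall>g'\<in>coords m n d - ?h ` ?S. ?f g' = 0"
    proof
      fix g' assume g': "g' \<in> coords m n d - ?h ` ?S"
      have "\<And>r i j. g' \<noteq> CY r i j"
      proof
        fix r i j assume e: "g' = CY r i j"
        then have "r < m" "i < n" "j < n" using g' unfolding coords_def by auto
        then have "CY r i j \<in> ?h ` ?S" by (intro image_eqI[of _ _ "(r, i, j)"]) auto
        then show False using g' e by simp
      qed
      then show "?f g' = 0" using pdiff_nonY by simp
    qed
  qed
  also have "\<dots> = (\<Sum>x\<in>?S. ?f (?h x))" by (rule sum.reindex[OF inj, unfolded comp_def])
  also have "\<dots> = (\<Sum>(r, i, j)\<in>?S. Qb m n k p r j i * qpb m n p (CY r i j) g)"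
    by (intro sum.cong refl) (auto simp: pdiff_Y[OF m1 k1])
  also have "\<dots> = (\<Sum>r<m. \<Sum>i<n. \<Sum>j<n. Qb m n k p r j i * qpb m n p (CY r i j) g)"
    by (simp add: sum.cartesian_product)
  finally show ?thesis .
qed


lemma dd:
  fixes F :: "nat \<Rightarrow> nat \<Rightarrow> complex"
  assumes "kk < n" "l < n"
  shows "(\<Sum>i<n. \<Sum>j<n. F i j * (kd i l * kd kk j)) = F l kk"
proof -
  have "(\<Sum>j<n. F i j * (kd i l * kd kk j)) = kd i l * F i kk" for i
  proof -
    have "(\<Sum>j<n. F i j * (kd i l * kd kk j)) = kd i l * (\<Sum>j<n. F i j * kd kk j)"
      by (simp add: sum_distrib_left mult_ac)
    then show ?thesis using sum_kd_all(4)[OF assms(1), of "F i"] by simp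
  qed
  then have "(\<Sum>i<n. \<Sum>j<n. F i j * (kd i l * kd kk j)) = (\<Sum>i<n. kd i l * F i kk)" by simp
  also have "\<dots> = F l kk" by (rule sum_kd_all(1)[OF assms(2)])
  finally show ?thesis .
qed

lemma d1:
  fixes F :: "nat \<Rightarrow> nat \<Rightarrow> complex"
  assumes "kk < n"
  shows "(\<Sum>i<n. \<Sum>j<n. F i j * kd kk j) = (\<Sum>i<n. F i kk)"
  using sum_kd_all(4)[OF assms] by simp

lemma d2:
  fixes F :: "nat \<Rightarrow> nat \<Rightarrow> complex"
  assumes "l < n"
  shows "(\<Sum>i<n. \<Sum>j<n. F i j * kd i l) = (\<Sum>j<n. F l j)"
  using sum_kd_all(3)[OF assms] by (subst sum.swap) simp

lemma tp1:
  fixes a :: "nat \<Rightarrow> complex"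
  shows "(\<Sum>i<n. a i * (\<Sum>q<n. b i q * c q)) = (\<Sum>q<n. (\<Sum>i<n. a i * b i q) * c q)"
  unfolding sum_distrib_left sum_distrib_right by (subst sum.swap) (simp add: mult_ac)

lemma tp2:
  fixes a :: "nat \<Rightarrow> complex"
  shows "(\<Sum>j<n. a j * (\<Sum>q<n. b q * c q j)) = (\<Sum>q<n. b q * (\<Sum>j<n. c q j * a j))"
  unfolding sum_distrib_left sum_distrib_right by (subst sum.swap) (simp add: mult_ac)

context
  fixes m n k :: nat and p :: point
  assumes m1: "m \<ge> 1" and k1: "k \<ge> 1"
begin

lemma ham_CX:
  assumes s: "s < m" and kk: "kk < n" and l: "l < n"
  shows "(\<Sum>r<m. \<Sum>i<n. \<Sum>j<n. Qb m n k p r j i * qpb m n p (CY r i j) (CX s kk l))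
       = (- (bigY m n p ^\<^sub>m (k - 1)) - bigX m n p * bigY m n p ^\<^sub>m k) $$ (s * n + kk, cs m s * n + l)"
proof -
  have cps: "cp m s < m" and css: "cs m s < m" using cp_lt cs_lt m1 by auto
  have q: "qpb m n p (CY r i j) (CX s kk l) = - (kd r s * (kd i l * kd kk j
      + 1/2 * (\<Sum>q<n. p (CY s i q) * p (CX s q l)) * kd kk j
      + 1/2 * kd i l * (\<Sum>q<n. p (CX s kk q) * p (CY s q j)))
      - 1/2 * kd r (cp m s) * p (CX s i l) * p (CY (cp m s) kk j)
      + 1/2 * kd r (cs m s) * p (CY (cs m s) i l) * p (CX s kk j))" for r i j
    by (simp add: qpb_def)
  define S1 where "S1 r = (\<Sum>i<n. \<Sum>j<n. Qb m n k p r j i * (kd i l * kd kk j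
      + 1/2 * (\<Sum>q<n. p (CY s i q) * p (CX s q l)) * kd kk j
      + 1/2 * kd i l * (\<Sum>q<n. p (CX s kk q) * p (CY s q j))))" for r
  define S2 where "S2 r = (\<Sum>i<n. \<Sum>j<n. Qb m n k p r j i * (p (CX s i l) * p (CY (cp m s) kk j)))" for r
  define S3 where "S3 r = (\<Sum>i<n. \<Sum>j<n. Qb m n k p r j i * (p (CY (cs m s) i l) * p (CX s kk j)))" for r
  have G: "(\<Sum>i<n. \<Sum>j<n. Qb m n k p r j i * qpb m n p (CY r i j) (CX s kk l))
      = - (kd r s * S1 r) + 1/2 * (kd r (cp m s) * S2 r) - 1/2 * (kd r (cs m s) * S3 r)" for r
  proof -
    have "- (kd r s * S1 r) + 1/2 * (kd r (cp m s) * S2 r) - 1/2 * (kd r (cs m s) * S3 r)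
      = (\<Sum>i<n. \<Sum>j<n. - (kd r s * (Qb m n k p r j i * (kd i l * kd kk j
      + 1/2 * (\<Sum>q<n. p (CY s i q) * p (CX s q l)) * kd kk j
      + 1/2 * kd i l * (\<Sum>q<n. p (CX s kk q) * p (CY s q j)))))
      + 1/2 * (kd r (cp m s) * (Qb m n k p r j i * (p (CX s i l) * p (CY (cp m s) kk j))))
      - 1/2 * (kd r (cs m s) * (Qb m n k p r j i * (p (CY (cs m s) i l) * p (CX s kk j)))))"
      unfolding S1_def S2_def S3_def
      by (simp only: sum.distrib sum_subtractf sum_negf sum_distrib_left)
    also have "\<dots> = (\<Sum>i<n. \<Sum>j<n. Qb m n k p r j i * qpb m n p (CY r i j) (CX s kk l))"
      unfolding q by (intro sum.cong refl) (simp add: algebra_simps)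
    finally show ?thesis ..
  qed
  have "(\<Sum>r<m. \<Sum>i<n. \<Sum>j<n. Qb m n k p r j i * qpb m n p (CY r i j) (CX s kk l))
      = (\<Sum>r<m. - (kd r s * S1 r) + 1/2 * (kd r (cp m s) * S2 r) - 1/2 * (kd r (cs m s) * S3 r))"
    by (simp only: G)
  also have "\<dots> = - (\<Sum>r<m. kd r s * S1 r) + 1/2 * (\<Sum>r<m. kd r (cp m s) * S2 r) - 1/2 * (\<Sum>r<m. kd r (cs m s) * S3 r)"
    by (simp only: sum.distrib sum_subtractf sum_negf sum_distrib_left)
  also have "\<dots> = - S1 s + 1/2 * S2 (cp m s) - 1/2 * S3 (cs m s)"
    by (simp only: sum_kd_all(1)[OF s] sum_kd_all(1)[OF cps] sum_kd_all(1)[OF css])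
  also have "S1 s = Qb m n k p s kk l + 1/2 * (\<Sum>q<n. Ab m n k p s kk q * p (CX s q l))
      + 1/2 * (\<Sum>q<n. p (CX s kk q) * Ab m n k p (cs m s) q l)"
  proof -
    have "S1 s = (\<Sum>i<n. \<Sum>j<n. Qb m n k p s j i * (kd i l * kd kk j))
        + (\<Sum>i<n. \<Sum>j<n. (1/2 * Qb m n k p s j i * (\<Sum>q<n. p (CY s i q) * p (CX s q l))) * kd kk j)
        + (\<Sum>i<n. \<Sum>j<n. (1/2 * Qb m n k p s j i * (\<Sum>q<n. p (CX s kk q) * p (CY s q j))) * kd i l)"
      unfolding S1_def by (simp only: sum.distrib[symmetric]) (intro sum.cong refl, simp add: algebra_simps)
    also have "\<dots> = Qb m n k p s kk l
        + (\<Sum>i<n. 1/2 * Qb m n k p s kk i * (\<Sum>q<n. p (CY s i q) * p (CX s q l)))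
        + (\<Sum>j<n. 1/2 * Qb m n k p s j l * (\<Sum>q<n. p (CX s kk q) * p (CY s q j)))"
      by (simp only: dd[OF kk l] d1[OF kk] d2[OF l])
    also have "(\<Sum>i<n. 1/2 * Qb m n k p s kk i * (\<Sum>q<n. p (CY s i q) * p (CX s q l)))
        = 1/2 * (\<Sum>q<n. Ab m n k p s kk q * p (CX s q l))"
    proof -
      have "(\<Sum>i<n. 1/2 * Qb m n k p s kk i * (\<Sum>q<n. p (CY s i q) * p (CX s q l)))
          = 1/2 * (\<Sum>i<n. Qb m n k p s kk i * (\<Sum>q<n. p (CY s i q) * p (CX s q l)))"
        by (simp add: sum_distrib_left mult_ac)
      also have "\<dots> = 1/2 * (\<Sum>q<n. (\<Sum>i<n. Qb m n k p s kk i * p (CY s i q)) * p (CX s q l))"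
        by (simp only: tp1)
      also have "\<dots> = 1/2 * (\<Sum>q<n. Ab m n k p s kk q * p (CX s q l))"
        using blk_a[OF m1 k1 s kk] by simp
      finally show ?thesis .
    qed
    also have "(\<Sum>j<n. 1/2 * Qb m n k p s j l * (\<Sum>q<n. p (CX s kk q) * p (CY s q j)))
        = 1/2 * (\<Sum>q<n. p (CX s kk q) * Ab m n k p (cs m s) q l)"
    proof -
      have "(\<Sum>j<n. 1/2 * Qb m n k p s j l * (\<Sum>q<n. p (CX s kk q) * p (CY s q j)))
          = 1/2 * (\<Sum>j<n. Qb m n k p s j l * (\<Sum>q<n. p (CX s kk q) * p (CY s q j)))"
        by (simp add: sum_distrib_left mult_ac)
      also have "\<dots> = 1/2 * (\<Sum>q<n. p (CX s kk q) * (\<Sum>j<n. p (CY s q j) * Qb m n k p s j l))"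
        by (simp only: tp2)
      also have "\<dots> = 1/2 * (\<Sum>q<n. p (CX s kk q) * Ab m n k p (cs m s) q l)"
        using blk_b[OF m1 k1 s _ l] by simp
      finally show ?thesis .
    qed
    finally show ?thesis .
  qed
  also have "S2 (cp m s) = (\<Sum>i<n. Ab m n k p s kk i * p (CX s i l))"
  proof -
    have "S2 (cp m s) = (\<Sum>i<n. (\<Sum>j<n. p (CY (cp m s) kk j) * Qb m n k p (cp m s) j i) * p (CX s i l))"
      unfolding S2_def sum_distrib_right by (intro sum.cong refl) (simp add: mult_ac)
    also have "\<dots> = (\<Sum>i<n. Ab m n k p (cs m (cp m s)) kk i * p (CX s i l))"
      using blk_b[OF m1 k1 cps kk] by simp
    finally show ?thesis using cs_cp[OF m1 s] by simp
  qed
  also have "S3 (cs m s) = (\<Sum>j<n. p (CX s kk j) * Ab m n k p (cs m s) j l)"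
  proof -
    have "S3 (cs m s) = (\<Sum>j<n. p (CX s kk j) * (\<Sum>i<n. Qb m n k p (cs m s) j i * p (CY (cs m s) i l)))"
      unfolding S3_def sum_distrib_left by (subst sum.swap) (intro sum.cong refl, simp add: mult_ac)
    also have "\<dots> = (\<Sum>j<n. p (CX s kk j) * Ab m n k p (cs m s) j l)"
      using blk_a[OF m1 k1 css _ l] by simp
    finally show ?thesis .
  qed
  finally have "(\<Sum>r<m. \<Sum>i<n. \<Sum>j<n. Qb m n k p r j i * qpb m n p (CY r i j) (CX s kk l))
      = - Qb m n k p s kk l - (\<Sum>j<n. p (CX s kk j) * Ab m n k p (cs m s) j l)"
    by (simp add: algebra_simps)
  then show ?thesis using blk_d[OF m1 k1 s kk l] by simp
qed


lemma sum_kd_cp: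
  fixes f :: "nat \<Rightarrow> complex"
  assumes s: "s < m" shows "(\<Sum>r<m. kd s (cp m r) * f r) = f (cs m s)"
proof -
  have "(\<Sum>r<m. kd s (cp m r) * f r) = (\<Sum>r<m. kd r (cs m s) * f r)"
    by (intro sum.cong refl) (use cp_iff[OF m1 _ s] in \<open>auto simp: kd_def\<close>)
  then show ?thesis using sum_kd_all(1)[OF cs_lt[OF m1, of s], of f] by simp
qed

lemma sum_kd_cs:
  fixes f :: "nat \<Rightarrow> complex"
  assumes s: "s < m" shows "(\<Sum>r<m. kd s (cs m r) * f r) = f (cp m s)"
proof -
  have "(\<Sum>r<m. kd s (cs m r) * f r) = (\<Sum>r<m. kd r (cp m s) * f r)"
    by (intro sum.cong refl) (use cs_iff[OF m1 _ s] in \<open>auto simp: kd_def\<close>)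
  then show ?thesis using sum_kd_all(1)[OF cp_lt[OF m1, of s], of f] by simp
qed

lemma ham_CY:
  assumes s: "s < m" and kk: "kk < n" and l: "l < n"
  shows "(\<Sum>r<m. \<Sum>i<n. \<Sum>j<n. Qb m n k p r j i * qpb m n p (CY r i j) (CY s kk l)) = 0"
proof -
  have cps: "cp m s < m" and css: "cs m s < m" using cp_lt cs_lt m1 by auto
  have q: "qpb m n p (CY r i j) (CY s kk l) =
      1/2 * kd s (cp m r) * kd kk j * (\<Sum>q<n. p (CY r i q) * p (CY (cp m r) q l))
      - 1/2 * kd s (cs m r) * (\<Sum>q<n. p (CY (cs m r) kk q) * p (CY r q j)) * kd i l" for r i j
    by (simp add: qpb_def)
  define S1 where "S1 r = (\<Sum>i<n. \<Sum>j<n. (Qb m n k p r j i * (\<Sum>q<n. p (CY r i q) * p (CY (cp m r) q l))) * kd kk j)" for r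
  define S2 where "S2 r = (\<Sum>i<n. \<Sum>j<n. (Qb m n k p r j i * (\<Sum>q<n. p (CY (cs m r) kk q) * p (CY r q j))) * kd i l)" for r
  have G: "(\<Sum>i<n. \<Sum>j<n. Qb m n k p r j i * qpb m n p (CY r i j) (CY s kk l))
      = 1/2 * (kd s (cp m r) * S1 r) - 1/2 * (kd s (cs m r) * S2 r)" for r
  proof -
    have "1/2 * (kd s (cp m r) * S1 r) - 1/2 * (kd s (cs m r) * S2 r)
      = (\<Sum>i<n. \<Sum>j<n. 1/2 * (kd s (cp m r) * ((Qb m n k p r j i * (\<Sum>q<n. p (CY r i q) * p (CY (cp m r) q l))) * kd kk j))
          - 1/2 * (kd s (cs m r) * ((Qb m n k p r j i * (\<Sum>q<n. p (CY (cs m r) kk q) * p (CY r q j))) * kd i l)))"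
      unfolding S1_def S2_def
      by (simp only: sum.distrib sum_subtractf sum_negf sum_distrib_left)
    also have "\<dots> = (\<Sum>i<n. \<Sum>j<n. Qb m n k p r j i * qpb m n p (CY r i j) (CY s kk l))"
      unfolding q by (intro sum.cong refl) (simp add: algebra_simps)
    finally show ?thesis ..
  qed
  have "(\<Sum>r<m. \<Sum>i<n. \<Sum>j<n. Qb m n k p r j i * qpb m n p (CY r i j) (CY s kk l))
      = (\<Sum>r<m. 1/2 * (kd s (cp m r) * S1 r) - 1/2 * (kd s (cs m r) * S2 r))"
    by (simp only: G)
  also have "\<dots> = 1/2 * (\<Sum>r<m. kd s (cp m r) * S1 r) - 1/2 * (\<Sum>r<m. kd s (cs m r) * S2 r)"
    by (simp only: sum.distrib sum_subtractf sum_negf sum_distrib_left)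
  also have "\<dots> = 1/2 * S1 (cs m s) - 1/2 * S2 (cp m s)"
    by (simp only: sum_kd_cp[OF s] sum_kd_cs[OF s])
  also have "S1 (cs m s) = (\<Sum>q<n. Ab m n k p (cs m s) kk q * p (CY s q l))"
  proof -
    have "S1 (cs m s) = (\<Sum>i<n. Qb m n k p (cs m s) kk i * (\<Sum>q<n. p (CY (cs m s) i q) * p (CY s q l)))"
      unfolding S1_def d1[OF kk] cp_cs[OF m1 s] ..
    also have "\<dots> = (\<Sum>q<n. (\<Sum>i<n. Qb m n k p (cs m s) kk i * p (CY (cs m s) i q)) * p (CY s q l))"
      by (simp only: tp1)
    also have "\<dots> = (\<Sum>q<n. Ab m n k p (cs m s) kk q * p (CY s q l))"
      using blk_a[OF m1 k1 css kk] by simp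
    finally show ?thesis .
  qed
  also have "S2 (cp m s) = (\<Sum>q<n. p (CY s kk q) * Ab m n k p s q l)"
  proof -
    have "S2 (cp m s) = (\<Sum>j<n. Qb m n k p (cp m s) j l * (\<Sum>q<n. p (CY s kk q) * p (CY (cp m s) q j)))"
      unfolding S2_def d2[OF l] cs_cp[OF m1 s] ..
    also have "\<dots> = (\<Sum>q<n. p (CY s kk q) * (\<Sum>j<n. p (CY (cp m s) q j) * Qb m n k p (cp m s) j l))"
      by (simp only: tp2)
    also have "\<dots> = (\<Sum>q<n. p (CY s kk q) * Ab m n k p (cs m (cp m s)) q l)"
      using blk_b[OF m1 k1 cps _ l] by simp
    finally show ?thesis using cs_cp[OF m1 s] by simp
  qed
  finally show ?thesis using blk_c[OF m1 k1 s kk l] by simp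
qed

lemma ham_CV:
  assumes s: "s < m" and l: "l < n"
  shows "(\<Sum>r<m. \<Sum>i<n. \<Sum>j<n. Qb m n k p r j i * qpb m n p (CY r i j) (CV s a l)) = 0"
proof -
  have cps: "cp m s < m" and css: "cs m s < m" using cp_lt cs_lt m1 by auto
  have q: "qpb m n p (CY r i j) (CV s a l) =
      1/2 * kd s (cs m r) * (\<Sum>q<n. p (CV (cs m r) a q) * p (CY r q j)) * kd i l
      - 1/2 * kd r s * p (CV r a j) * p (CY r i l)" for r i j
    by (simp add: qpb_def)
  define S1 where "S1 r = (\<Sum>i<n. \<Sum>j<n. (Qb m n k p r j i * (\<Sum>q<n. p (CV (cs m r) a q) * p (CY r q j))) * kd i l)" for r
  define S2 where "S2 r = (\<Sum>i<n. \<Sum>j<n. Qb m n k p r j i * (p (CV r a j) * p (CY r i l)))" for r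
  have G: "(\<Sum>i<n. \<Sum>j<n. Qb m n k p r j i * qpb m n p (CY r i j) (CV s a l))
      = 1/2 * (kd s (cs m r) * S1 r) - 1/2 * (kd r s * S2 r)" for r
  proof -
    have "1/2 * (kd s (cs m r) * S1 r) - 1/2 * (kd r s * S2 r)
      = (\<Sum>i<n. \<Sum>j<n. 1/2 * (kd s (cs m r) * ((Qb m n k p r j i * (\<Sum>q<n. p (CV (cs m r) a q) * p (CY r q j))) * kd i l))
          - 1/2 * (kd r s * (Qb m n k p r j i * (p (CV r a j) * p (CY r i l)))))"
      unfolding S1_def S2_def
      by (simp only: sum.distrib sum_subtractf sum_negf sum_distrib_left)
    also have "\<dots> = (\<Sum>i<n. \<Sum>j<n. Qb m n k p r j i * qpb m n p (CY r i j) (CV s a l))"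
      unfolding q by (intro sum.cong refl) (simp add: algebra_simps)
    finally show ?thesis ..
  qed
  have "(\<Sum>r<m. \<Sum>i<n. \<Sum>j<n. Qb m n k p r j i * qpb m n p (CY r i j) (CV s a l))
      = (\<Sum>r<m. 1/2 * (kd s (cs m r) * S1 r) - 1/2 * (kd r s * S2 r))"
    by (simp only: G)
  also have "\<dots> = 1/2 * (\<Sum>r<m. kd s (cs m r) * S1 r) - 1/2 * (\<Sum>r<m. kd r s * S2 r)"
    by (simp only: sum.distrib sum_subtractf sum_negf sum_distrib_left)
  also have "\<dots> = 1/2 * S1 (cp m s) - 1/2 * S2 s"
    by (simp only: sum_kd_cs[OF s] sum_kd_all(1)[OF s])
  also have "S1 (cp m s) = (\<Sum>q<n. p (CV s a q) * Ab m n k p s q l)"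
  proof -
    have "S1 (cp m s) = (\<Sum>j<n. Qb m n k p (cp m s) j l * (\<Sum>q<n. p (CV s a q) * p (CY (cp m s) q j)))"
      unfolding S1_def d2[OF l] cs_cp[OF m1 s] ..
    also have "\<dots> = (\<Sum>q<n. p (CV s a q) * (\<Sum>j<n. p (CY (cp m s) q j) * Qb m n k p (cp m s) j l))"
      by (simp only: tp2)
    also have "\<dots> = (\<Sum>q<n. p (CV s a q) * Ab m n k p (cs m (cp m s)) q l)"
      using blk_b[OF m1 k1 cps _ l] by simp
    finally show ?thesis using cs_cp[OF m1 s] by simp
  qed
  also have "S2 s = (\<Sum>j<n. p (CV s a j) * Ab m n k p s j l)"
  proof -
    have "S2 s = (\<Sum>j<n. p (CV s a j) * (\<Sum>i<n. Qb m n k p s j i * p (CY s i l)))"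
      unfolding S2_def sum_distrib_left by (subst sum.swap) (intro sum.cong refl, simp add: mult_ac)
    also have "\<dots> = (\<Sum>j<n. p (CV s a j) * Ab m n k p s j l)"
      using blk_a[OF m1 k1 s _ l] by simp
    finally show ?thesis .
  qed
  finally show ?thesis by simp
qed

lemma ham_CW:
  assumes s: "s < m" and kk: "kk < n"
  shows "(\<Sum>r<m. \<Sum>i<n. \<Sum>j<n. Qb m n k p r j i * qpb m n p (CY r i j) (CW s a kk)) = 0"
proof -
  have cps: "cp m s < m" and css: "cs m s < m" using cp_lt cs_lt m1 by auto
  have q: "qpb m n p (CY r i j) (CW s a kk) =
      1/2 * kd r s * kd kk j * (\<Sum>q<n. p (CY r i q) * p (CW r a q))
      - 1/2 * kd s (cs m r) * p (CY r kk j) * p (CW (cs m r) a i)" for r i j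
    by (simp add: qpb_def)
  define S1 where "S1 r = (\<Sum>i<n. \<Sum>j<n. (Qb m n k p r j i * (\<Sum>q<n. p (CY r i q) * p (CW r a q))) * kd kk j)" for r
  define S2 where "S2 r = (\<Sum>i<n. \<Sum>j<n. Qb m n k p r j i * (p (CY r kk j) * p (CW (cs m r) a i)))" for r
  have G: "(\<Sum>i<n. \<Sum>j<n. Qb m n k p r j i * qpb m n p (CY r i j) (CW s a kk))
      = 1/2 * (kd r s * S1 r) - 1/2 * (kd s (cs m r) * S2 r)" for r
  proof -
    have "1/2 * (kd r s * S1 r) - 1/2 * (kd s (cs m r) * S2 r)
      = (\<Sum>i<n. \<Sum>j<n. 1/2 * (kd r s * ((Qb m n k p r j i * (\<Sum>q<n. p (CY r i q) * p (CW r a q))) * kd kk j))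
          - 1/2 * (kd s (cs m r) * (Qb m n k p r j i * (p (CY r kk j) * p (CW (cs m r) a i)))))"
      unfolding S1_def S2_def
      by (simp only: sum.distrib sum_subtractf sum_negf sum_distrib_left)
    also have "\<dots> = (\<Sum>i<n. \<Sum>j<n. Qb m n k p r j i * qpb m n p (CY r i j) (CW s a kk))"
      unfolding q by (intro sum.cong refl) (simp add: algebra_simps)
    finally show ?thesis ..
  qed
  have "(\<Sum>r<m. \<Sum>i<n. \<Sum>j<n. Qb m n k p r j i * qpb m n p (CY r i j) (CW s a kk))
      = (\<Sum>r<m. 1/2 * (kd r s * S1 r) - 1/2 * (kd s (cs m r) * S2 r))"
    by (simp only: G)
  also have "\<dots> = 1/2 * (\<Sum>r<m. kd r s * S1 r) - 1/2 * (\<Sum>r<m. kd s (cs m r) * S2 r)"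
    by (simp only: sum.distrib sum_subtractf sum_negf sum_distrib_left)
  also have "\<dots> = 1/2 * S1 s - 1/2 * S2 (cp m s)"
    by (simp only: sum_kd_cs[OF s] sum_kd_all(1)[OF s])
  also have "S1 s = (\<Sum>q<n. Ab m n k p s kk q * p (CW s a q))"
  proof -
    have "S1 s = (\<Sum>i<n. Qb m n k p s kk i * (\<Sum>q<n. p (CY s i q) * p (CW s a q)))"
      unfolding S1_def d1[OF kk] ..
    also have "\<dots> = (\<Sum>q<n. (\<Sum>i<n. Qb m n k p s kk i * p (CY s i q)) * p (CW s a q))"
      by (simp only: tp1)
    also have "\<dots> = (\<Sum>q<n. Ab m n k p s kk q * p (CW s a q))"
      using blk_a[OF m1 k1 s kk] by simp
    finally show ?thesis .
  qed
  also have "S2 (cp m s) = (\<Sum>i<n. Ab m n k p s kk i * p (CW s a i))"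
  proof -
    have "S2 (cp m s) = (\<Sum>i<n. (\<Sum>j<n. p (CY (cp m s) kk j) * Qb m n k p (cp m s) j i) * p (CW s a i))"
      unfolding S2_def sum_distrib_right cs_cp[OF m1 s] by (intro sum.cong refl) (simp add: mult_ac)
    also have "\<dots> = (\<Sum>i<n. Ab m n k p (cs m (cp m s)) kk i * p (CW s a i))"
      using blk_b[OF m1 k1 cps kk] by simp
    finally show ?thesis using cs_cp[OF m1 s] by simp
  qed
  finally show ?thesis by simp
qed

end


lemma commute_mexp:
  assumes B: "B \<in> carrier_mat N N" and C: "C \<in> carrier_mat N N" and BC: "C * B = B * C"
  shows "C * mexp (z \<cdot>\<^sub>m B) = mexp (z \<cdot>\<^sub>m B) * C"
proof (rule eq_matI)
  fix a b assume "a < dim_row (mexp (z \<cdot>\<^sub>m B) * C)" "b < dim_col (mexp (z \<cdot>\<^sub>m B) * C)"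
  then have ab: "a < N" "b < N" using B C by auto
  have "(C * mexp (z \<cdot>\<^sub>m B)) $$ (a, b) = (\<Sum>l<N. C $$ (a, l) * mexp (z \<cdot>\<^sub>m B) $$ (l, b))"
    by (rule mult_entry) (use B C ab in auto)
  also have "\<dots> = (\<Sum>l<N. C $$ (a, l) * (\<Sum>j. ecoef B l b j * z ^ j))"
    by (intro sum.cong refl) (use B ab in \<open>simp add: mexp_entry\<close>)
  also have "\<dots> = (\<Sum>j. \<Sum>l<N. C $$ (a, l) * (ecoef B l b j * z ^ j))"
    by (rule sum_suminf_left) (rule ecoef_summable[OF B _ ab(2)], simp)
  also have "\<dots> = (\<Sum>j. (C * B ^\<^sub>m j) $$ (a, b) / fact j * z ^ j)"
  proof (rule suminf_cong)
    fix j
    have e: "(C * B ^\<^sub>m j) $$ (a, b) = (\<Sum>l<N. C $$ (a, l) * (B ^\<^sub>m j) $$ (l, b))"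
      by (rule mult_entry) (use B C ab in auto)
    show "(\<Sum>l<N. C $$ (a, l) * (ecoef B l b j * z ^ j)) = (C * B ^\<^sub>m j) $$ (a, b) / fact j * z ^ j"
      unfolding e ecoef_def sum_divide_distrib sum_distrib_right
      by (intro sum.cong refl) (simp add: field_simps)
  qed
  also have "\<dots> = (\<Sum>j. (B ^\<^sub>m j * C) $$ (a, b) / fact j * z ^ j)"
    using pow_commute_gen[OF B C BC] by simp
  also have "\<dots> = (\<Sum>j. \<Sum>l<N. (ecoef B a l j * z ^ j) * C $$ (l, b))"
  proof (rule suminf_cong)
    fix j
    have e: "(B ^\<^sub>m j * C) $$ (a, b) = (\<Sum>l<N. (B ^\<^sub>m j) $$ (a, l) * C $$ (l, b))"
      by (rule mult_entry) (use B C ab in auto)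
    show "(B ^\<^sub>m j * C) $$ (a, b) / fact j * z ^ j = (\<Sum>l<N. (ecoef B a l j * z ^ j) * C $$ (l, b))"
      unfolding e ecoef_def sum_divide_distrib sum_distrib_right
      by (intro sum.cong refl) (simp add: field_simps)
  qed
  also have "\<dots> = (\<Sum>l<N. (\<Sum>j. ecoef B a l j * z ^ j) * C $$ (l, b))"
    by (rule sum_suminf_right(1)[symmetric]) (rule ecoef_summable[OF B ab(1)], simp)
  also have "\<dots> = (\<Sum>l<N. mexp (z \<cdot>\<^sub>m B) $$ (a, l) * C $$ (l, b))"
    by (intro sum.cong refl) (use B ab in \<open>simp add: mexp_entry\<close>)
  also have "\<dots> = (mexp (z \<cdot>\<^sub>m B) * C) $$ (a, b)"
    by (rule mult_entry[symmetric]) (use B C ab in auto)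
  finally show "(C * mexp (z \<cdot>\<^sub>m B)) $$ (a, b) = (mexp (z \<cdot>\<^sub>m B) * C) $$ (a, b)" .
qed (use B C in auto)

lemma invertible_extract:
  fixes A :: "complex mat"
  assumes A: "A \<in> carrier_mat n n" and inv: "invertible_mat A"
  shows "\<exists>A'. A' \<in> carrier_mat n n \<and> A * A' = 1\<^sub>m n \<and> A' * A = 1\<^sub>m n"
proof -
  obtain A' where 1: "A * A' = 1\<^sub>m (dim_row A)" and 2: "A' * A = 1\<^sub>m (dim_row A')"
    using inv unfolding invertible_mat_def inverts_mat_def by blast
  have "dim_col A' = n" using arg_cong[OF 1, of dim_col] A by simp
  moreover have "dim_row A' = n" using arg_cong[OF 2, of dim_col] A by simp
  ultimately show ?thesis using 1 2 A by (intro exI[of _ A']) auto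
qed

lemma invertible_prod:
  fixes A B :: "complex mat"
  assumes A: "A \<in> carrier_mat n n" and B: "B \<in> carrier_mat n n"
    and iA: "invertible_mat A" and B': "B' \<in> carrier_mat n n" "B * B' = 1\<^sub>m n" "B' * B = 1\<^sub>m n"
  shows "invertible_mat (A * B)"
proof -
  obtain A' where A': "A' \<in> carrier_mat n n" "A * A' = 1\<^sub>m n" "A' * A = 1\<^sub>m n"
    using invertible_extract[OF A iA] by blast
  have "(A * B) * (B' * A') = A * (B * B') * A'"
    using A B A'(1) B'(1) by (simp add: assoc_mult_mat[of _ n n _ n _ n])
  also have "\<dots> = A * 1\<^sub>m n * A'" by (simp only: B'(2))
  also have "\<dots> = 1\<^sub>m n" using A A' by simp
  finally have 1: "(A * B) * (B' * A') = 1\<^sub>m n" .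
  have "(B' * A') * (A * B) = B' * (A' * A) * B"
    using A B A'(1) B'(1) by (simp add: assoc_mult_mat[of _ n n _ n _ n])
  also have "\<dots> = B' * 1\<^sub>m n * B" by (simp only: A'(3))
  also have "\<dots> = 1\<^sub>m n" using B B' by simp
  finally have 2: "(B' * A') * (A * B) = 1\<^sub>m n" .
  show ?thesis unfolding invertible_mat_def inverts_mat_def square_mat.simps
    using 1 2 A B A' B' by (intro conjI exI[of _ "B' * A'"]) auto
qed

definition blk :: "nat \<Rightarrow> complex mat \<Rightarrow> nat \<Rightarrow> nat \<Rightarrow> complex mat" where
  "blk n M s s' = mat n n (\<lambda>(i, j). M $$ (s * n + i, s' * n + j))"

lemma blk_dim[simp]: "dim_row (blk n M s s') = n" "dim_col (blk n M s s') = n" unfolding blk_def by simp_all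

lemma blk_carrier[simp]: "blk n M s s' \<in> carrier_mat n n" unfolding blk_def by simp

definition bdiag :: "nat \<Rightarrow> nat \<Rightarrow> complex mat \<Rightarrow> bool" where
  "bdiag n N D \<longleftrightarrow> (\<forall>a b. a < N \<longrightarrow> b < N \<longrightarrow> a div n \<noteq> b div n \<longrightarrow> D $$ (a, b) = 0)"

lemma blk_mult_diag:
  fixes m n :: nat
  assumes M: "M \<in> carrier_mat (n * m) (n * m)" and D: "D \<in> carrier_mat (n * m) (n * m)"
    and dD: "bdiag n (n * m) D" and s: "s < m" and s': "s' < m"
  shows "blk n (M * D) s' s = blk n M s' s * blk n D s s"
proof (rule eq_matI)
  fix i l assume "i < dim_row (blk n M s' s * blk n D s s)" "l < dim_col (blk n M s' s * blk n D s s)"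
  then have il: "i < n" "l < n" by auto
  have a: "s' * n + i < n * m" "s * n + l < n * m" using idx_lt s s' il by auto
  have "blk n (M * D) s' s $$ (i, l) = (M * D) $$ (s' * n + i, s * n + l)" unfolding blk_def using il by simp
  also have "\<dots> = (\<Sum>c<n * m. M $$ (s' * n + i, c) * D $$ (c, s * n + l))"
    by (rule mult_entry) (use M D a in auto)
  also have "\<dots> = (\<Sum>j<n. M $$ (s' * n + i, s * n + j) * D $$ (s * n + j, s * n + l))"
    by (rule block_sum[OF s]) (use dD a il in \<open>auto simp: bdiag_def\<close>)
  also have "\<dots> = (blk n M s' s * blk n D s s) $$ (i, l)"
    using il by (simp add: mult_entry[of _ n n _ n] blk_def del: index_mult_mat)
  finally show "blk n (M * D) s' s $$ (i, l) = (blk n M s' s * blk n D s s) $$ (i, l)" .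
qed auto

lemma blk_one:
  assumes "s < m" shows "blk n (1\<^sub>m (n * m)) s s = 1\<^sub>m n"
  by (rule eq_matI) (use idx_lt[OF assms] in \<open>auto simp: blk_def\<close>)

lemma blk_add:
  assumes "A \<in> carrier_mat (n * m) (n * m)" "B \<in> carrier_mat (n * m) (n * m)" "s < m" "s' < m"
  shows "blk n (A + B) s s' = blk n A s s' + blk n B s s'"
  by (rule eq_matI) (use assms idx_lt[OF assms(3)] idx_lt[OF assms(4)] in \<open>auto simp: blk_def\<close>)

context
  fixes m n :: nat
  assumes m1: "m \<ge> 1"
begin

lemma Xm_blk:
  assumes s: "s < m"
  shows "Xm n q s = blk n (bigX m n q) s (cs m s)"
  by (rule eq_matI) (use bigX_entry[OF m1 s] in \<open>auto simp: blk_def Xm_def\<close>)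

lemma Ym_blk:
  assumes s: "s < m"
  shows "Ym n q s = blk n (bigY m n q) (cs m s) s"
  by (rule eq_matI) (use bigY_entry[OF m1 s] in \<open>auto simp: blk_def Ym_def\<close>)

lemma XY_blk:
  assumes s: "s < m"
  shows "Xm n q s * Ym n q' s = blk n (bigX m n q * bigY m n q') s s"
proof (rule eq_matI)
  fix i l assume "i < dim_row (blk n (bigX m n q * bigY m n q') s s)" "l < dim_col (blk n (bigX m n q * bigY m n q') s s)"
  then have il: "i < n" "l < n" by auto
  have css: "cs m s < m" by (rule cs_lt[OF m1])
  have a: "s * n + i < n * m" "s * n + l < n * m" using idx_lt s il by auto
  have "blk n (bigX m n q * bigY m n q') s s $$ (i, l) = (bigX m n q * bigY m n q') $$ (s * n + i, s * n + l)"
    unfolding blk_def using il by simp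
  also have "\<dots> = (\<Sum>c<n * m. bigX m n q $$ (s * n + i, c) * bigY m n q' $$ (c, s * n + l))"
    by (rule mult_entry) (use a in auto)
  also have "\<dots> = (\<Sum>j<n. bigX m n q $$ (s * n + i, cs m s * n + j) * bigY m n q' $$ (cs m s * n + j, s * n + l))"
    by (rule block_sum[OF css]) (use bigY_zero a il in auto)
  also have "\<dots> = (Xm n q s * Ym n q' s) $$ (i, l)"
    using il bigX_entry[OF m1 s] bigY_entry[OF m1 s]
    by (simp add: mult_entry[of _ n n _ n] Xm_def Ym_def del: index_mult_mat)
  finally show "(Xm n q s * Ym n q' s) $$ (i, l) = blk n (bigX m n q * bigY m n q') s s $$ (i, l)" ..
qed (auto simp: Xm_def Ym_def)

lemma YX_blk:
  assumes s: "s < m"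
  shows "Ym n q s * Xm n q' s = blk n (bigY m n q * bigX m n q') (cs m s) (cs m s)"
proof (rule eq_matI)
  fix i l assume "i < dim_row (blk n (bigY m n q * bigX m n q') (cs m s) (cs m s))" "l < dim_col (blk n (bigY m n q * bigX m n q') (cs m s) (cs m s))"
  then have il: "i < n" "l < n" by auto
  have css: "cs m s < m" by (rule cs_lt[OF m1])
  have a: "cs m s * n + i < n * m" "cs m s * n + l < n * m" using idx_lt css il by auto
  have "blk n (bigY m n q * bigX m n q') (cs m s) (cs m s) $$ (i, l) = (bigY m n q * bigX m n q') $$ (cs m s * n + i, cs m s * n + l)"
    unfolding blk_def using il by simp
  also have "\<dots> = (\<Sum>c<n * m. bigY m n q $$ (cs m s * n + i, c) * bigX m n q' $$ (c, cs m s * n + l))"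
    by (rule mult_entry) (use a in auto)
  also have "\<dots> = (\<Sum>j<n. bigY m n q $$ (cs m s * n + i, s * n + j) * bigX m n q' $$ (s * n + j, cs m s * n + l))"
  proof (rule block_sum[OF s])
    fix c assume c: "c < n * m" "c div n \<noteq> s"
    have "cs m s \<noteq> cs m (c div n)" using cs_inj[OF m1 s div_lt[OF c(1)]] c(2) by auto
    then show "bigY m n q $$ (cs m s * n + i, c) * bigX m n q' $$ (c, cs m s * n + l) = 0"
      using bigY_zero[of "cs m s * n + i" n m c q] a c il by simp
  qed
  also have "\<dots> = (Ym n q s * Xm n q' s) $$ (i, l)"
    using il bigX_entry[OF m1 s] bigY_entry[OF m1 s]
    by (simp add: mult_entry[of _ n n _ n] Xm_def Ym_def del: index_mult_mat)
  finally show "(Ym n q s * Xm n q' s) $$ (i, l) = blk n (bigY m n q * bigX m n q') (cs m s) (cs m s) $$ (i, l)" ..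
qed (auto simp: Xm_def Ym_def)

lemma powY_sparse:
  assumes "a < n * m" "b < n * m" "(bigY m n q ^\<^sub>m j) $$ (a, b) \<noteq> 0"
  shows "a div n = (b div n + j) mod m"
  using assms
proof (induction j arbitrary: b)
  case 0
  then have "a = b" by (cases "a = b") auto
  then show ?case using div_lt[OF 0(2)] by simp
next
  case (Suc j)
  have "(bigY m n q ^\<^sub>m Suc j) $$ (a, b) = (\<Sum>c<n * m. (bigY m n q ^\<^sub>m j) $$ (a, c) * bigY m n q $$ (c, b))"
    by (simp only: pow_mat.simps) (rule mult_entry, use Suc.prems in auto)
  then obtain c where c: "c < n * m" "(bigY m n q ^\<^sub>m j) $$ (a, c) \<noteq> 0" "bigY m n q $$ (c, b) \<noteq> 0"
    using Suc.prems(3) by (metis (no_types, lifting) lessThan_iff mult_not_zero sum.neutral)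
  have "c div n = cs m (b div n)" using bigY_zero[OF c(1) Suc.prems(2)] c(3) by blast
  moreover have "a div n = (c div n + j) mod m" by (rule Suc.IH[OF Suc.prems(1) c(1) c(2)])
  ultimately show ?case unfolding cs_def by (simp add: mod_add_left_eq)
qed

lemma pow_kdiag:
  assumes "k mod m = 0" "a < n * m" "b < n * m" "a div n \<noteq> b div n"
  shows "(bigY m n q ^\<^sub>m (k * j)) $$ (a, b) = 0"
proof (rule ccontr)
  assume "(bigY m n q ^\<^sub>m (k * j)) $$ (a, b) \<noteq> 0"
  from powY_sparse[OF assms(2,3) this] have "a div n = (b div n + k * j) mod m" .
  also have "\<dots> = b div n"
  proof -
    have "(k * j) mod m = 0" using assms(1) by (metis dvd_mult2 mod_eq_0_iff_dvd)
    then show ?thesis using div_lt[OF assms(3)] by (metis add.right_neutral mod_add_right_eq mod_less)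
  qed
  finally show False using assms(4) by simp
qed

lemma rhs_sparse:
  assumes km: "k mod m = 0" and k1: "k \<ge> 1" and ab: "a < n * m" "b < n * m" and nb: "b div n \<noteq> cs m (a div n)"
  shows "(- (bigY m n q ^\<^sub>m (k - 1)) - bigX m n q' * bigY m n q ^\<^sub>m k) $$ (a, b) = 0"
proof -
  have bm: "b div n < m" by (rule div_lt[OF ab(2)])
  have P0: "(bigY m n q ^\<^sub>m (k - 1)) $$ (a, b) = 0"
  proof (rule ccontr)
    assume "(bigY m n q ^\<^sub>m (k - 1)) $$ (a, b) \<noteq> 0"
    from powY_sparse[OF ab this] have e: "a div n = (b div n + (k - 1)) mod m" .
    have "cs m (a div n) = (b div n + (k - 1) + 1) mod m" unfolding e cs_def by (simp add: mod_Suc_eq)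
    also have "\<dots> = (b div n + k) mod m" using k1 by simp
    also have "\<dots> = b div n" using km bm by (metis add.right_neutral mod_add_right_eq mod_less)
    finally show False using nb by simp
  qed
  have XK: "(bigX m n q' * bigY m n q ^\<^sub>m k) $$ (a, b) = 0"
  proof -
    have "(bigX m n q' * bigY m n q ^\<^sub>m k) $$ (a, b) = (\<Sum>c<n * m. bigX m n q' $$ (a, c) * (bigY m n q ^\<^sub>m k) $$ (c, b))"
      by (rule mult_entry) (use ab in auto)
    also have "\<dots> = 0"
    proof (rule sum.neutral, rule ballI)
      fix c assume c: "c \<in> {..<n * m}"
      show "bigX m n q' $$ (a, c) * (bigY m n q ^\<^sub>m k) $$ (c, b) = 0"
      proof (cases "c div n = cs m (a div n)")
        case True
        then have "c div n \<noteq> b div n" using nb by simp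
        then have "(bigY m n q ^\<^sub>m (k * 1)) $$ (c, b) = 0" using pow_kdiag[OF km _ ab(2), of c q 1] c by auto
        then show ?thesis by simp
      next
        case False
        then show ?thesis using bigX_zero[OF ab(1), of c q'] c by auto
      qed
    qed
    finally show ?thesis .
  qed
  show ?thesis using P0 XK ab by simp
qed

end


lemma part1:
  assumes m1: "m \<ge> 1" and k1: "k \<ge> 1" and g: "g \<in> coords m n d"
  shows "hamvf m n d (trYk m n k) p g =
          (case g of
             CX r i j \<Rightarrow> (- (bigY m n p ^\<^sub>m (k - 1)) - bigX m n p * bigY m n p ^\<^sub>m k)
                            $$ (r * n + i, cs m r * n + j)
           | _ \<Rightarrow> 0)"
  using g unfolding coords_def hamvf_red[OF m1 k1]
  by (auto simp: ham_CX[OF m1 k1] ham_CY[OF m1 k1] ham_CV[OF m1 k1] ham_CW[OF m1 k1])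

lemma Xsol0:
  "bigX m n p0 * mexp ((- of_real 0) \<cdot>\<^sub>m bigY m n p0 ^\<^sub>m k) + expm1_over k 0 (bigY m n p0) = bigX m n p0"
proof -
  have K: "bigY m n p0 ^\<^sub>m k \<in> carrier_mat (n * m) (n * m)" by simp
  have "mexp ((- of_real 0) \<cdot>\<^sub>m bigY m n p0 ^\<^sub>m k) = 1\<^sub>m (n * m)" using mexp_zero[OF K] by simp
  moreover have "expm1_over k 0 (bigY m n p0) = 0\<^sub>m (n * m) (n * m)" by (rule S_zero) simp
  ultimately show ?thesis by simp
qed

lemma Xsol_deriv:
  assumes k1: "k \<ge> 1" and ab: "a < n * m" "b < n * m"
  shows "((\<lambda>s. (bigX m n p0 * mexp ((- of_real s) \<cdot>\<^sub>m bigY m n p0 ^\<^sub>m k) + expm1_over k s (bigY m n p0)) $$ (a, b))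
     has_vector_derivative
     (- (bigY m n p0 ^\<^sub>m (k - 1)) - (bigX m n p0 * mexp ((- of_real t) \<cdot>\<^sub>m bigY m n p0 ^\<^sub>m k) + expm1_over k t (bigY m n p0)) * bigY m n p0 ^\<^sub>m k) $$ (a, b)) (at t)"
proof -
  let ?N = "n * m"
  let ?X = "bigX m n p0" and ?Y = "bigY m n p0"
  let ?K = "bigY m n p0 ^\<^sub>m k"
  define E where "E s = mexp ((- of_real s) \<cdot>\<^sub>m ?K)" for s :: real
  define S where "S s = expm1_over k s ?Y" for s :: real
  have X: "?X \<in> carrier_mat ?N ?N" and Y: "?Y \<in> carrier_mat ?N ?N" and K: "?K \<in> carrier_mat ?N ?N" by simp_all
  have EC: "E s \<in> carrier_mat ?N ?N" for s unfolding E_def by simp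
  have SC: "S s \<in> carrier_mat ?N ?N" for s unfolding S_def by simp
  have f: "(\<lambda>s. (?X * E s + S s) $$ (a, b)) = (\<lambda>s. (?X * E s) $$ (a, b) + S s $$ (a, b))"
  proof
    fix s show "(?X * E s + S s) $$ (a, b) = (?X * E s) $$ (a, b) + S s $$ (a, b)"
      by (rule index_add_mat) (use EC[of s] SC[of s] ab in auto)
  qed
  have d1: "((\<lambda>s. (?X * E s) $$ (a, b)) has_vector_derivative (0\<^sub>m ?N ?N * E t + ?X * (- (?K * E t))) $$ (a, b)) (at t)"
  proof (rule prod_deriv[where F = "\<lambda>s. ?X" and N = ?N])
    fix a b assume ab: "a < ?N" "b < ?N"
    show "((\<lambda>s. ?X $$ (a, b)) has_vector_derivative 0\<^sub>m ?N ?N $$ (a, b)) (at t)" using ab by simp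
    show "((\<lambda>s. E s $$ (a, b)) has_vector_derivative (- (?K * E t)) $$ (a, b)) (at t)"
      unfolding E_def using mexp_deriv_neg[OF K ab, of t] K ab by simp
  qed (use X K ab in \<open>auto intro!: EC mult_carrier_mat uminus_carrier_mat\<close>)
  have d2: "((\<lambda>s. S s $$ (a, b)) has_vector_derivative (- (?Y ^\<^sub>m (k - 1)) - S t * ?K) $$ (a, b)) (at t)"
    unfolding S_def by (rule S_deriv[OF Y k1 ab])
  have v: "(0\<^sub>m ?N ?N * E t + ?X * (- (?K * E t))) $$ (a, b) + (- (?Y ^\<^sub>m (k - 1)) - S t * ?K) $$ (a, b)
      = (- (?Y ^\<^sub>m (k - 1)) - (?X * E t + S t) * ?K) $$ (a, b)"
  proof -
    have "(?X * E t + S t) * ?K = (?X * E t) * ?K + S t * ?K"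
      by (rule add_mult_distrib_mat[of _ ?N ?N]) (use X EC[of t] SC[of t] K in auto)
    also have "(?X * E t) * ?K = ?X * (E t * ?K)" using X EC[of t] K by (simp add: assoc_mult_mat[of _ ?N ?N _ ?N _ ?N])
    also have "E t * ?K = ?K * E t" unfolding E_def by (rule mexp_commute[OF K])
    finally have e: "(?X * E t + S t) * ?K = ?X * (?K * E t) + S t * ?K" .
    have "?X * (- (?K * E t)) = - (?X * (?K * E t))"
      using uminus_mult_right_mat[of ?X "?K * E t"] X K EC[of t] by simp
    then show ?thesis unfolding e using X K EC[of t] SC[of t] ab Y by simp
  qed
  have "((\<lambda>s. (?X * E s + S s) $$ (a, b)) has_vector_derivative (- (?Y ^\<^sub>m (k - 1)) - (?X * E t + S t) * ?K) $$ (a, b)) (at t)"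
    unfolding f v[symmetric] by (rule has_vector_derivative_add[OF d1 d2])
  then show ?thesis unfolding E_def S_def .
qed

lemma mexp_bdiag:
  assumes m1: "m \<ge> 1" and km: "k mod m = 0"
  shows "bdiag n (n * m) (mexp (z \<cdot>\<^sub>m bigY m n q ^\<^sub>m k))"
  unfolding bdiag_def
proof (intro allI impI)
  fix a b assume ab: "a < n * m" "b < n * m" and d: "a div n \<noteq> b div n"
  have K: "bigY m n q ^\<^sub>m k \<in> carrier_mat (n * m) (n * m)" by simp
  have "mexp (z \<cdot>\<^sub>m bigY m n q ^\<^sub>m k) $$ (a, b) = (\<Sum>j. ecoef (bigY m n q ^\<^sub>m k) a b j * z ^ j)"
    by (rule mexp_entry[OF K ab])
  also have "\<dots> = (\<Sum>j. 0)"
  proof (rule suminf_cong)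
    fix j
    have "((bigY m n q ^\<^sub>m k) ^\<^sub>m j) $$ (a, b) = 0"
      unfolding pow_mult[OF bigY_carrier] by (rule pow_kdiag[OF m1 km ab d])
    then show "ecoef (bigY m n q ^\<^sub>m k) a b j * z ^ j = 0" by (simp add: ecoef_def)
  qed
  finally show "mexp (z \<cdot>\<^sub>m bigY m n q ^\<^sub>m k) $$ (a, b) = 0" by simp
qed


lemma ID1:
  assumes k1: "k \<ge> 1"
  shows "1\<^sub>m (n * m) + (bigX m n p0 * mexp ((- of_real t) \<cdot>\<^sub>m bigY m n p0 ^\<^sub>m k) + expm1_over k t (bigY m n p0)) * bigY m n p0
       = (1\<^sub>m (n * m) + bigX m n p0 * bigY m n p0) * mexp ((- of_real t) \<cdot>\<^sub>m bigY m n p0 ^\<^sub>m k)"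
proof -
  let ?N = "n * m"
  let ?X = "bigX m n p0" and ?Y = "bigY m n p0" and ?K = "bigY m n p0 ^\<^sub>m k"
  let ?E = "mexp ((- of_real t) \<cdot>\<^sub>m ?K)" and ?S = "expm1_over k t ?Y"
  have X: "?X \<in> carrier_mat ?N ?N" and Y: "?Y \<in> carrier_mat ?N ?N" and K: "?K \<in> carrier_mat ?N ?N" by simp_all
  have E: "?E \<in> carrier_mat ?N ?N" and S: "?S \<in> carrier_mat ?N ?N" by simp_all
  have "(?X * ?E + ?S) * ?Y = (?X * ?E) * ?Y + ?S * ?Y"
    by (rule add_mult_distrib_mat[of _ ?N ?N]) (use X E S Y in auto)
  also have "(?X * ?E) * ?Y = ?X * (?E * ?Y)" using X E Y by (simp add: assoc_mult_mat[of _ ?N ?N _ ?N _ ?N])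
  also have "?E * ?Y = ?Y * ?E" by (rule commute_mexp[OF K Y pow_commute[OF Y], symmetric])
  also have "?X * (?Y * ?E) = (?X * ?Y) * ?E" using X E Y by (simp add: assoc_mult_mat[of _ ?N ?N _ ?N _ ?N])
  also have "?S * ?Y = ?E - 1\<^sub>m ?N" by (rule S_times_Y(1)[OF Y k1])
  finally have e: "(?X * ?E + ?S) * ?Y = (?X * ?Y) * ?E + (?E - 1\<^sub>m ?N)" .
  define A where "A = (?X * ?Y) * ?E"
  have AC: "A \<in> carrier_mat ?N ?N" unfolding A_def using X Y E by (meson mult_carrier_mat)
  have "(1\<^sub>m ?N + ?X * ?Y) * ?E = 1\<^sub>m ?N * ?E + A"
    unfolding A_def by (rule add_mult_distrib_mat[of _ ?N ?N]) (use X Y E in auto)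
  also have "1\<^sub>m ?N * ?E = ?E" by (rule left_mult_one_mat[OF E])
  finally have e2: "(1\<^sub>m ?N + ?X * ?Y) * ?E = ?E + A" .
  have fin: "1\<^sub>m ?N + (A + (?E - 1\<^sub>m ?N)) = ?E + A"
    by (rule eq_matI) (use AC E in auto)
  show ?thesis unfolding e e2 unfolding A_def[symmetric] by (rule fin)
qed

lemma ID2:
  assumes k1: "k \<ge> 1"
  shows "1\<^sub>m (n * m) + bigY m n p0 * (bigX m n p0 * mexp ((- of_real t) \<cdot>\<^sub>m bigY m n p0 ^\<^sub>m k) + expm1_over k t (bigY m n p0))
       = (1\<^sub>m (n * m) + bigY m n p0 * bigX m n p0) * mexp ((- of_real t) \<cdot>\<^sub>m bigY m n p0 ^\<^sub>m k)"
proof -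
  let ?N = "n * m"
  let ?X = "bigX m n p0" and ?Y = "bigY m n p0" and ?K = "bigY m n p0 ^\<^sub>m k"
  let ?E = "mexp ((- of_real t) \<cdot>\<^sub>m ?K)" and ?S = "expm1_over k t ?Y"
  have X: "?X \<in> carrier_mat ?N ?N" and Y: "?Y \<in> carrier_mat ?N ?N" and K: "?K \<in> carrier_mat ?N ?N" by simp_all
  have E: "?E \<in> carrier_mat ?N ?N" and S: "?S \<in> carrier_mat ?N ?N" by simp_all
  have "?Y * (?X * ?E + ?S) = ?Y * (?X * ?E) + ?Y * ?S"
    by (rule mult_add_distrib_mat[of _ ?N ?N]) (use X E S Y in auto)
  also have "?Y * (?X * ?E) = (?Y * ?X) * ?E" using X E Y by (simp add: assoc_mult_mat[of _ ?N ?N _ ?N _ ?N])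
  also have "?Y * ?S = ?E - 1\<^sub>m ?N" by (rule S_times_Y(2)[OF Y k1])
  finally have e: "?Y * (?X * ?E + ?S) = (?Y * ?X) * ?E + (?E - 1\<^sub>m ?N)" .
  define A where "A = (?Y * ?X) * ?E"
  have AC: "A \<in> carrier_mat ?N ?N" unfolding A_def using X Y E by (meson mult_carrier_mat)
  have "(1\<^sub>m ?N + ?Y * ?X) * ?E = 1\<^sub>m ?N * ?E + A"
    unfolding A_def by (rule add_mult_distrib_mat[of _ ?N ?N]) (use X Y E in auto)
  also have "1\<^sub>m ?N * ?E = ?E" by (rule left_mult_one_mat[OF E])
  finally have e2: "(1\<^sub>m ?N + ?Y * ?X) * ?E = ?E + A" .
  have fin: "1\<^sub>m ?N + (A + (?E - 1\<^sub>m ?N)) = ?E + A"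
    by (rule eq_matI) (use AC E in auto)
  show ?thesis unfolding e e2 unfolding A_def[symmetric] by (rule fin)
qed

lemma blk_inv:
  assumes m1: "m \<ge> 1" and km: "k mod m = 0" and s: "s < m"
  shows "blk n (mexp ((- of_real t) \<cdot>\<^sub>m bigY m n q ^\<^sub>m k)) s s * blk n (mexp (of_real t \<cdot>\<^sub>m bigY m n q ^\<^sub>m k)) s s = 1\<^sub>m n"
    "blk n (mexp (of_real t \<cdot>\<^sub>m bigY m n q ^\<^sub>m k)) s s * blk n (mexp ((- of_real t) \<cdot>\<^sub>m bigY m n q ^\<^sub>m k)) s s = 1\<^sub>m n"
proof -
  have K: "bigY m n q ^\<^sub>m k \<in> carrier_mat (n * m) (n * m)" by simp
  let ?E = "mexp ((- of_real t) \<cdot>\<^sub>m bigY m n q ^\<^sub>m k)" and ?F = "mexp (of_real t \<cdot>\<^sub>m bigY m n q ^\<^sub>m k)"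
  have E: "?E \<in> carrier_mat (n * m) (n * m)" and F: "?F \<in> carrier_mat (n * m) (n * m)" by simp_all
  have 1: "blk n (?E * ?F) s s = blk n ?E s s * blk n ?F s s"
    by (rule blk_mult_diag[where m = m]) (use E F mexp_bdiag[OF m1 km] s in auto)
  have 2: "blk n (?F * ?E) s s = blk n ?F s s * blk n ?E s s"
    by (rule blk_mult_diag[where m = m]) (use E F mexp_bdiag[OF m1 km] s in auto)
  show "blk n ?E s s * blk n ?F s s = 1\<^sub>m n"
    using 1 mexp_inv'[OF K, of t] blk_one[OF s, of n] by simp
  show "blk n ?F s s * blk n ?E s s = 1\<^sub>m n"
    using 2 mexp_inv[OF K, of t] blk_one[OF s, of n] by simp
qed


lemma coords_CX: "CX r i j \<in> coords m n d \<longleftrightarrow> r < m \<and> i < n \<and> j < n"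
  unfolding coords_def by auto
lemma coords_CY: "CY r i j \<in> coords m n d \<longleftrightarrow> r < m \<and> i < n \<and> j < n"
  unfolding coords_def by auto
lemma coords_CV: "CV s a j \<in> coords m n d \<longleftrightarrow> s < m \<and> 1 \<le> a \<and> a \<le> d s \<and> j < n"
  unfolding coords_def by auto
lemma coords_CW: "CW s a j \<in> coords m n d \<longleftrightarrow> s < m \<and> 1 \<le> a \<and> a \<le> d s \<and> j < n"
  unfolding coords_def by auto

theorem proposition3p3:
  fixes m n k0 :: nat and d :: "nat \<Rightarrow> nat" and p0 :: point
  assumes "m \<ge> 2" and "n \<ge> 1" and "d 0 \<ge> 1" and "k0 \<ge> 1"
    and "p0 \<in> Mbullet m n d"
  defines "k \<equiv> k0 * m"
  shows
    "(\<forall>p\<in>Mbullet m n d. \<forall>g\<in>coords m n d.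
        hamvf m n d (trYk m n k) p g =
          (case g of
             CX r i j \<Rightarrow> (- (bigY m n p ^\<^sub>m (k - 1)) - bigX m n p * bigY m n p ^\<^sub>m k)
                            $$ (r * n + i, cs m r * n + j)
           | _ \<Rightarrow> 0))
     \<and> (\<forall>c :: real \<Rightarrow> point.
          ((\<forall>g\<in>coords m n d. c 0 g = p0 g) \<and>
           (\<forall>t. \<forall>g\<in>coords m n d.
              ((\<lambda>s. c s g) has_vector_derivative hamvf m n d (trYk m n k) (c t) g) (at t)))
          \<longleftrightarrow>
          (\<forall>t. bigX m n (c t) =
                 bigX m n p0 * mexp ((- of_real t) \<cdot>\<^sub>m bigY m n p0 ^\<^sub>m k)
                 + expm1_over k t (bigY m n p0)
             \<and> bigY m n (c t) = bigY m n p0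
             \<and> (\<forall>s a j. CV s a j \<in> coords m n d \<longrightarrow> c t (CV s a j) = p0 (CV s a j))
             \<and> (\<forall>s a j. CW s a j \<in> coords m n d \<longrightarrow> c t (CW s a j) = p0 (CW s a j))))
     \<and> (\<forall>c :: real \<Rightarrow> point.
          (\<forall>t. bigX m n (c t) =
                 bigX m n p0 * mexp ((- of_real t) \<cdot>\<^sub>m bigY m n p0 ^\<^sub>m k)
                 + expm1_over k t (bigY m n p0)
             \<and> bigY m n (c t) = bigY m n p0
             \<and> (\<forall>s a j. CV s a j \<in> coords m n d \<longrightarrow> c t (CV s a j) = p0 (CV s a j))
             \<and> (\<forall>s a j. CW s a j \<in> coords m n d \<longrightarrow> c t (CW s a j) = p0 (CW s a j)))
          \<longrightarrow> (\<forall>t. c t \<in> Mbullet m n d))"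
proof -
  have m1: "m \<ge> 1" using assms(1) by simp
  have k1: "k \<ge> 1"
  proof -
    have "1 * 1 \<le> k0 * m" by (rule mult_le_mono) (use assms(1,4) in auto)
    then show ?thesis unfolding k_def by simp
  qed
  have km: "k mod m = 0" unfolding k_def by simp
  let ?N = "n * m"
  let ?Y0 = "bigY m n p0" and ?X0 = "bigX m n p0" and ?K = "bigY m n p0 ^\<^sub>m k"
  let ?Xs = "\<lambda>t::real. bigX m n p0 * mexp ((- of_real t) \<cdot>\<^sub>m bigY m n p0 ^\<^sub>m k) + expm1_over k t (bigY m n p0)"
  have XsC: "?Xs t \<in> carrier_mat ?N ?N" for t by simp
  have K: "?K \<in> carrier_mat ?N ?N" by simp
  have P1: "hamvf m n d (trYk m n k) p g =
          (case g of
             CX r i j \<Rightarrow> (- (bigY m n p ^\<^sub>m (k - 1)) - bigX m n p * bigY m n p ^\<^sub>m k)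
                            $$ (r * n + i, cs m r * n + j)
           | _ \<Rightarrow> 0)" if "g \<in> coords m n d" for p g
    by (rule part1[OF m1 k1 that])
  define FORM where "FORM c \<longleftrightarrow> (\<forall>t. bigX m n (c t) = ?Xs t
             \<and> bigY m n (c t) = bigY m n p0
             \<and> (\<forall>s a j. CV s a j \<in> coords m n d \<longrightarrow> c t (CV s a j) = p0 (CV s a j))
             \<and> (\<forall>s a j. CW s a j \<in> coords m n d \<longrightarrow> c t (CW s a j) = p0 (CW s a j)))" for c :: "real \<Rightarrow> point"
  have part2: "((\<forall>g\<in>coords m n d. c 0 g = p0 g) \<and>
           (\<forall>t. \<forall>g\<in>coords m n d.
              ((\<lambda>s. c s g) has_vector_derivative hamvf m n d (trYk m n k) (c t) g) (at t)))
          \<longleftrightarrow> FORM c" for c :: "real \<Rightarrow> point"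
  proof
    assume AB: "(\<forall>g\<in>coords m n d. c 0 g = p0 g) \<and>
           (\<forall>t. \<forall>g\<in>coords m n d.
              ((\<lambda>s. c s g) has_vector_derivative hamvf m n d (trYk m n k) (c t) g) (at t))"
    then have init: "\<And>g. g \<in> coords m n d \<Longrightarrow> c 0 g = p0 g"
      and ode: "\<And>t g. g \<in> coords m n d \<Longrightarrow> ((\<lambda>s. c s g) has_vector_derivative hamvf m n d (trYk m n k) (c t) g) (at t)"
      by auto
    have const: "c t g = p0 g" if g: "g \<in> coords m n d" and nx: "\<And>r i j. g \<noteq> CX r i j" for t g
    proof -
      have d0: "((\<lambda>s. c s g) has_vector_derivative 0) (at t')" for t'
      proof -
        have "hamvf m n d (trYk m n k) (c t') g = 0" using P1[OF g, of "c t'"] nx by (cases g) auto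
        then show ?thesis using ode[OF g, of t'] by simp
      qed
      have "c t g = c 0 g" using deriv0_const[of "\<lambda>s. c s g", OF d0] .
      then show ?thesis using init[OF g] by simp
    qed
    have Yc: "bigY m n (c t) = ?Y0" for t
      by (rule bigY_cong) (rule const, auto simp: coords_CY)
    have BX: "((\<lambda>s. bigX m n (c s) $$ (a, b)) has_vector_derivative
        (- (?Y0 ^\<^sub>m (k - 1)) - bigX m n (c t) * ?K) $$ (a, b)) (at t)" if ab: "a < ?N" "b < ?N" for t a b
    proof (cases "b div n = cs m (a div n)")
      case True
      define r where "r = a div n"
      define i where "i = a mod n"
      define j where "j = b mod n"
      have n0: "n > 0" using ab by (cases n) auto
      have r: "r < m" using div_lt[OF ab(1)] r_def by simp
      have i: "i < n" and j: "j < n" using n0 by (simp_all add: i_def j_def)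
      have a_eq: "a = r * n + i" by (simp add: r_def i_def)
      have b_eq: "b = cs m r * n + j"
        using True div_mult_mod_eq[of b n] by (simp add: r_def j_def)
      have g: "CX r i j \<in> coords m n d" using r i j by (simp add: coords_CX)
      have f: "(\<lambda>s. bigX m n (c s) $$ (a, b)) = (\<lambda>s. c s (CX r i j))"
        unfolding a_eq b_eq using bigX_entry[OF m1 r i j] by simp
      have "hamvf m n d (trYk m n k) (c t) (CX r i j) = (- (?Y0 ^\<^sub>m (k - 1)) - bigX m n (c t) * ?K) $$ (a, b)"
        using P1[OF g, of "c t"] Yc[of t] a_eq b_eq by simp
      then show ?thesis using ode[OF g, of t] unfolding f by simp
    next
      case False
      have f: "(\<lambda>s. bigX m n (c s) $$ (a, b)) = (\<lambda>s. 0)" using bigX_zero[OF ab False] by simp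
      have "(- (?Y0 ^\<^sub>m (k - 1)) - bigX m n (c t) * ?K) $$ (a, b) = 0"
        by (rule rhs_sparse[OF m1 km k1 ab False])
      then show ?thesis unfolding f by simp
    qed
    define Z where "Z s = bigX m n (c s) - ?Xs s" for s
    have ZC: "Z s \<in> carrier_mat ?N ?N" for s unfolding Z_def by (rule minus_carrier_mat) auto
    have X0eq: "bigX m n (c 0) = ?X0"
      by (rule bigX_cong) (rule init, auto simp: coords_CX)
    have Z0: "Z 0 = 0\<^sub>m ?N ?N" unfolding Z_def X0eq Xsol0
      by (rule eq_matI) auto
    have dZ: "((\<lambda>s. Z s $$ (a, b)) has_vector_derivative (- (Z t * ?K)) $$ (a, b)) (at t)"
      if ab: "a < ?N" "b < ?N" for t a b
    proof -
      have f: "(\<lambda>s. Z s $$ (a, b)) = (\<lambda>s. bigX m n (c s) $$ (a, b) - ?Xs s $$ (a, b))"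
        unfolding Z_def using ab by auto
      have d: "((\<lambda>s. bigX m n (c s) $$ (a, b) - ?Xs s $$ (a, b)) has_vector_derivative
          (- (?Y0 ^\<^sub>m (k - 1)) - bigX m n (c t) * ?K) $$ (a, b) - (- (?Y0 ^\<^sub>m (k - 1)) - ?Xs t * ?K) $$ (a, b)) (at t)"
        by (rule has_vector_derivative_diff[OF BX[OF ab] Xsol_deriv[OF k1 ab]])
      have e: "Z t * ?K = bigX m n (c t) * ?K - ?Xs t * ?K"
        unfolding Z_def by (rule minus_mult_distrib_mat[of _ ?N ?N]) (use XsC K in auto)
      have "(- (?Y0 ^\<^sub>m (k - 1)) - bigX m n (c t) * ?K) $$ (a, b) - (- (?Y0 ^\<^sub>m (k - 1)) - ?Xs t * ?K) $$ (a, b)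
          = (- (Z t * ?K)) $$ (a, b)"
        unfolding e using ab XsC[of t] K by simp
      then show ?thesis using d unfolding f by simp
    qed
    have Zt: "Z t = 0\<^sub>m ?N ?N" for t by (rule lin_unique[OF K ZC Z0 dZ])
    have Xc: "bigX m n (c t) = ?Xs t" for t
    proof (rule eq_matI)
      fix a b assume "a < dim_row (?Xs t)" "b < dim_col (?Xs t)"
      then have ab: "a < ?N" "b < ?N" by auto
      have "Z t $$ (a, b) = 0" using Zt[of t] ab by simp
      then show "bigX m n (c t) $$ (a, b) = ?Xs t $$ (a, b)" unfolding Z_def using ab by simp
    qed auto
    show "FORM c" unfolding FORM_def
      using Xc Yc const by (auto simp: coords_CV coords_CW)
  next
    assume F: "FORM c"
    have Fx: "bigX m n (c t) = ?Xs t" and Fy: "bigY m n (c t) = ?Y0"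
      and Fv: "\<And>s a j. CV s a j \<in> coords m n d \<Longrightarrow> c t (CV s a j) = p0 (CV s a j)"
      and Fw: "\<And>s a j. CW s a j \<in> coords m n d \<Longrightarrow> c t (CW s a j) = p0 (CW s a j)" for t
      using F unfolding FORM_def by auto
    have cX: "c t (CX r i j) = ?Xs t $$ (r * n + i, cs m r * n + j)" if "r < m" "i < n" "j < n" for t r i j
      using bigX_entry[OF m1 that, of "c t"] Fx[of t] by simp
    have cY: "c t (CY r i j) = p0 (CY r i j)" if "r < m" "i < n" "j < n" for t r i j
      using bigY_entry[OF m1 that, of "c t"] bigY_entry[OF m1 that, of p0] Fy[of t] by simp
    show "(\<forall>g\<in>coords m n d. c 0 g = p0 g) \<and>
           (\<forall>t. \<forall>g\<in>coords m n d.
              ((\<lambda>s. c s g) has_vector_derivative hamvf m n d (trYk m n k) (c t) g) (at t))"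
    proof (intro conjI ballI allI)
      fix g assume g: "g \<in> coords m n d"
      show "c 0 g = p0 g"
      proof (cases g)
        case (CX r i j)
        then have rij: "r < m" "i < n" "j < n" using g by (simp_all add: coords_CX)
        have "c 0 g = ?Xs 0 $$ (r * n + i, cs m r * n + j)" using cX[OF rij] CX by simp
        also have "\<dots> = ?X0 $$ (r * n + i, cs m r * n + j)" by (simp only: Xsol0)
        also have "\<dots> = p0 g" using bigX_entry[OF m1 rij] CX by simp
        finally show ?thesis .
      next
        case (CY r i j)
        then show ?thesis using g cY by (simp add: coords_CY)
      next
        case (CV s a j)
        then show ?thesis using g Fv by simp
      next
        case (CW s a j)
        then show ?thesis using g Fw by simp
      qed
    next
      fix t g assume g: "g \<in> coords m n d"
      show "((\<lambda>s. c s g) has_vector_derivative hamvf m n d (trYk m n k) (c t) g) (at t)"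
      proof (cases g)
        case (CX r i j)
        then have rij: "r < m" "i < n" "j < n" using g by (simp_all add: coords_CX)
        have ab: "r * n + i < ?N" "cs m r * n + j < ?N" using idx_lt rij cs_lt[OF m1] by auto
        have f: "(\<lambda>s. c s g) = (\<lambda>s. ?Xs s $$ (r * n + i, cs m r * n + j))" using cX[OF rij] CX by simp
        have "hamvf m n d (trYk m n k) (c t) g = (- (?Y0 ^\<^sub>m (k - 1)) - ?Xs t * ?K) $$ (r * n + i, cs m r * n + j)"
          using P1[OF g, of "c t"] CX Fx[of t] Fy[of t] by simp
        then show ?thesis unfolding f using Xsol_deriv[OF k1 ab, where t = t] by simp
      next
        case (CY r i j)
        then have rij: "r < m" "i < n" "j < n" using g by (simp_all add: coords_CY)
        have f: "(\<lambda>s. c s g) = (\<lambda>s. p0 (CY r i j))" using cY[OF rij] CY by simp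
        show ?thesis using P1[OF g, of "c t"] CY unfolding f by simp
      next
        case (CV s a j)
        have f: "(\<lambda>s. c s g) = (\<lambda>s. p0 g)" using Fv g CV by auto
        show ?thesis using P1[OF g, of "c t"] CV unfolding f by simp
      next
        case (CW s a j)
        have f: "(\<lambda>s. c s g) = (\<lambda>s. p0 g)" using Fw g CW by auto
        show ?thesis using P1[OF g, of "c t"] CW unfolding f by simp
      qed
    qed
  qed
  have part3: "FORM c \<longrightarrow> (\<forall>t. c t \<in> Mbullet m n d)" for c :: "real \<Rightarrow> point"
  proof
    assume F: "FORM c"
    have Fx: "bigX m n (c t) = ?Xs t" and Fy: "bigY m n (c t) = ?Y0"
      and Fv: "\<And>s a j. CV s a j \<in> coords m n d \<Longrightarrow> c t (CV s a j) = p0 (CV s a j)"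
      and Fw: "\<And>s a j. CW s a j \<in> coords m n d \<Longrightarrow> c t (CW s a j) = p0 (CW s a j)" for t
      using F unfolding FORM_def by auto
    have p0M: "\<forall>s<m. invertible_mat (1\<^sub>m n + Xm n p0 s * Ym n p0 s) \<and>
      invertible_mat (1\<^sub>m n + Ym n p0 s * Xm n p0 s) \<and>
      (\<forall>a. 1 \<le> a \<and> a \<le> d s \<longrightarrow>
         invertible_mat (1\<^sub>m n + Wm n p0 s a * Vm n p0 s a) \<and>
         1 + (Vm n p0 s a * Wm n p0 s a) $$ (0,0) \<noteq> 0)"
      using assms(5) unfolding Mbullet_def by simp
    show "\<forall>t. c t \<in> Mbullet m n d"
    proof (intro allI)
      fix t
      let ?E = "mexp ((- of_real t) \<cdot>\<^sub>m ?K)" and ?Ep = "mexp (of_real t \<cdot>\<^sub>m ?K)"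
      have E: "?E \<in> carrier_mat ?N ?N" by simp
      have Ebd: "bdiag n ?N ?E" by (rule mexp_bdiag[OF m1 km])
      have X0: "?X0 \<in> carrier_mat ?N ?N" and Y0: "?Y0 \<in> carrier_mat ?N ?N" by simp_all
      show "c t \<in> Mbullet m n d" unfolding Mbullet_def mem_Collect_eq
      proof (intro allI impI conjI)
        fix s assume s: "s < m"
        have css: "cs m s < m" by (rule cs_lt[OF m1])
        have inv1: "invertible_mat (1\<^sub>m n + Xm n p0 s * Ym n p0 s)" using p0M s by blast
        have inv2: "invertible_mat (1\<^sub>m n + Ym n p0 s * Xm n p0 s)" using p0M s by blast
        have C1: "1\<^sub>m n + Xm n p0 s * Ym n p0 s \<in> carrier_mat n n"
          by (intro add_carrier_mat one_carrier_mat mult_carrier_mat) (auto simp: Xm_def Ym_def)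
        have C2: "1\<^sub>m n + Ym n p0 s * Xm n p0 s \<in> carrier_mat n n"
          by (intro add_carrier_mat one_carrier_mat mult_carrier_mat) (auto simp: Xm_def Ym_def)
        have "1\<^sub>m n + Xm n (c t) s * Ym n (c t) s = blk n (1\<^sub>m ?N) s s + blk n (?Xs t * ?Y0) s s"
          using XY_blk[OF m1 s, where q = "c t" and q' = "c t" and n = n] Fx[of t] Fy[of t] blk_one[OF s, where n = n] by simp
        also have "\<dots> = blk n (1\<^sub>m ?N + ?Xs t * ?Y0) s s"
          by (rule blk_add[symmetric]) (use s XsC[of t] in auto)
        also have "1\<^sub>m ?N + ?Xs t * ?Y0 = (1\<^sub>m ?N + ?X0 * ?Y0) * ?E" by (rule ID1[OF k1])
        also have "blk n ((1\<^sub>m ?N + ?X0 * ?Y0) * ?E) s s = blk n (1\<^sub>m ?N + ?X0 * ?Y0) s s * blk n ?E s s"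
          by (rule blk_mult_diag[where m = m]) (use E Ebd s X0 Y0 in auto)
        also have "blk n (1\<^sub>m ?N + ?X0 * ?Y0) s s = 1\<^sub>m n + Xm n p0 s * Ym n p0 s"
        proof -
          have "blk n (1\<^sub>m ?N + ?X0 * ?Y0) s s = blk n (1\<^sub>m ?N) s s + blk n (?X0 * ?Y0) s s"
            by (rule blk_add) (use s X0 Y0 in auto)
          then show ?thesis using XY_blk[OF m1 s, where q = p0 and q' = p0 and n = n] blk_one[OF s, where n = n] by simp
        qed
        finally have e1: "1\<^sub>m n + Xm n (c t) s * Ym n (c t) s = (1\<^sub>m n + Xm n p0 s * Ym n p0 s) * blk n ?E s s" .
        show "invertible_mat (1\<^sub>m n + Xm n (c t) s * Ym n (c t) s)"
          unfolding e1 by (rule invertible_prod[OF C1 blk_carrier inv1 blk_carrier blk_inv[OF m1 km s]])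
        have "1\<^sub>m n + Ym n (c t) s * Xm n (c t) s = blk n (1\<^sub>m ?N) (cs m s) (cs m s) + blk n (?Y0 * ?Xs t) (cs m s) (cs m s)"
          using YX_blk[OF m1 s, where q = "c t" and q' = "c t" and n = n] Fx[of t] Fy[of t] blk_one[OF css, where n = n] by simp
        also have "\<dots> = blk n (1\<^sub>m ?N + ?Y0 * ?Xs t) (cs m s) (cs m s)"
          by (rule blk_add[symmetric]) (use css XsC[of t] in auto)
        also have "1\<^sub>m ?N + ?Y0 * ?Xs t = (1\<^sub>m ?N + ?Y0 * ?X0) * ?E" by (rule ID2[OF k1])
        also have "blk n ((1\<^sub>m ?N + ?Y0 * ?X0) * ?E) (cs m s) (cs m s) = blk n (1\<^sub>m ?N + ?Y0 * ?X0) (cs m s) (cs m s) * blk n ?E (cs m s) (cs m s)"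
          by (rule blk_mult_diag[where m = m]) (use E Ebd css X0 Y0 in auto)
        also have "blk n (1\<^sub>m ?N + ?Y0 * ?X0) (cs m s) (cs m s) = 1\<^sub>m n + Ym n p0 s * Xm n p0 s"
        proof -
          have "blk n (1\<^sub>m ?N + ?Y0 * ?X0) (cs m s) (cs m s) = blk n (1\<^sub>m ?N) (cs m s) (cs m s) + blk n (?Y0 * ?X0) (cs m s) (cs m s)"
            by (rule blk_add) (use css X0 Y0 in auto)
          then show ?thesis using YX_blk[OF m1 s, where q = p0 and q' = p0 and n = n] blk_one[OF css, where n = n] by simp
        qed
        finally have e2: "1\<^sub>m n + Ym n (c t) s * Xm n (c t) s = (1\<^sub>m n + Ym n p0 s * Xm n p0 s) * blk n ?E (cs m s) (cs m s)" .
        show "invertible_mat (1\<^sub>m n + Ym n (c t) s * Xm n (c t) s)"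
          unfolding e2 by (rule invertible_prod[OF C2 blk_carrier inv2 blk_carrier blk_inv[OF m1 km css]])
        fix a assume a: "1 \<le> a \<and> a \<le> d s"
        have W: "Wm n (c t) s a = Wm n p0 s a"
          by (rule eq_matI) (use Fw s a in \<open>auto simp: Wm_def coords_CW\<close>)
        have V: "Vm n (c t) s a = Vm n p0 s a"
          by (rule eq_matI) (use Fv s a in \<open>auto simp: Vm_def coords_CV\<close>)
        show "invertible_mat (1\<^sub>m n + Wm n (c t) s a * Vm n (c t) s a)" unfolding W V using p0M s a by blast
        show "1 + (Vm n (c t) s a * Wm n (c t) s a) $$ (0, 0) \<noteq> 0" unfolding W V using p0M s a by blast
      qed
    qed
  qed
  show ?thesis using P1 part2 part3 unfolding FORM_def by blast
qed


end
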